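(* Let $(V,E)$ be a finite graph and $p\in[0,1]$. Let $(\eta_t,\sigma_t)_{t\ge0}$ be a continuous-time Markov jump process on $\{0,1\}^E\times\{-1,1\}^V$ with the following rates: (a) if $\sigma'=\sigma$ and there is $e\in E$ with $\eta'=\eta^e$ and $\gamma_\eta(e)=1$, then $c((\eta,\sigma),(\eta',\sigma'))=\big((1-p)\mathbf 1_{\eta(e)=1}+p\mathbf 1_{\eta(e)=0}\big)\mathbf 1_{(\eta,\sigma)\in\mathcal C}$; (b) if $\sigma'=\sigma$ and there is $e\in E$ with $\eta'=\eta^e$, $\gamma_\eta(e)=0$ and $\delta_\sigma(e)=1$, then $c((\eta,\sigma),(\eta',\sigma'))=\frac12\big((1-p)\mathbf 1_{\eta(e)=1}+p\mathbf 1_{\eta(e)=0}\big)\mathbf 1_{(\eta,\sigma)\in\mathcal C}$; (c) if there are $x\in V$ and $e\in E_x$ with $\sigma'=\sigma^x$, $\eta'=\eta^e$, $\gamma_\eta(e)=0$, $\eta(e)=\delta_\sigma(e)$ and $\eta(f)=0$ for all $f\in E_x\setminus\{e\}$, then $c((\eta,\sigma),(\eta',\sigma'))=\frac14\big((1-p)\mathbf 1_{\eta(e)=1}\mathbf 1_{(\eta,\sigma)\in\mathcal C}+p\mathbf 1_{\eta(e)=0}\mathbf 1_{(\eta',\sigma')\in\mathcal C}\big)$; (d) all other off-diagonal rates are $0$. Suppose $(\eta_0,\sigma_0)$ is distributed according to $IP$. Then for every $x\in V$, $\sigma\in\{-1,1\}^V$ and $s\ge0$, $$\lim_{t\to0}\frac1t\,\mathbb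 P(\sigma_{t+s}=\sigma^x\mid\sigma_s=\sigma)=\frac14\,|E_x|\,p\,(1-p)^{|\{e\in E_x:\ \delta_\sigma(e)=1\}|}.$$
   Context: Edge configurations $\eta\in\{0,1\}^E$ (1 = open), spin configurations $\sigma\in\{-1,1\}^V$. For $e=\langle x,y\rangle$, $\delta_\sigma(e)=\mathbf 1_{\sigma(x)=\sigma(y)}$. $\mathcal C=\{(\eta,\sigma):\eta(e)\le\delta_\sigma(e)\ \forall e\in E\}$. $IP(\eta,\sigma)=\frac1Z\prod_{e\in E}\big(p\mathbf 1_{\eta(e)=1}\delta_\sigma(e)+(1-p)\mathbf 1_{\eta(e)=0}\big)$ with $Z$ the normalizing constant. $E_x$ is the set of edges with endvertex $x$; $\sigma^x$ is $\sigma$ with the spin at $x$ flipped; $\eta^e$ is $\eta$ with the value at $e$ changed. For $e=\langle x,y\rangle$, $\gamma_\eta(e)=1$ if $x,y$ are connected by a path of open edges of $\eta$ not using $e$, and $0$ otherwise. *)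

theory Defs
  imports "HOL-Probability.Probability"
begin

text \<open>Vertex set V = UNIV of a finite type 'v. Edges are 2-element sets of vertices.
 Edge configurations: functions eta :: 'v set => bool (True = open), equal to False off E.
 Spin configurations: sigma :: 'v => int with values in {-1,1}.\<close>

type_synonym 'v config = "('v set \<Rightarrow> bool) \<times> ('v \<Rightarrow> int)"

definition simple_graph :: "'v set set \<Rightarrow> bool" where
  "simple_graph E \<longleftrightarrow> (\<forall>e\<in>E. \<exists>x y. x \<noteq> y \<and> e = {x, y})"

definition incident :: "'v set set \<Rightarrow> 'v \<Rightarrow> 'v set set" where
  "incident E x = {e \<in> E. x \<in> e}"

text \<open>delta_sigma(e) = 1 iff the spins at the two endpoints agree.\<close>
definition agree :: "('v \<Rightarrow> int) \<Rightarrow> 'v set \<Rightarrow> bool" where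
  "agree \<sigma> e \<longleftrightarrow> (\<forall>x\<in>e. \<forall>y\<in>e. \<sigma> x = \<sigma> y)"

definition open_rel :: "'v set set \<Rightarrow> ('v set \<Rightarrow> bool) \<Rightarrow> 'v set \<Rightarrow> ('v \<times> 'v) set" where
  "open_rel E \<eta> e = {(u, w). \<exists>f\<in>E. f \<noteq> e \<and> \<eta> f \<and> f = {u, w}}"

definition gamma :: "'v set set \<Rightarrow> ('v set \<Rightarrow> bool) \<Rightarrow> 'v set \<Rightarrow> bool" where
  "gamma E \<eta> e \<longleftrightarrow> (\<exists>x y. e = {x, y} \<and> (x, y) \<in> (open_rel E \<eta> e)\<^sup>*)"

definition flipE :: "('v set \<Rightarrow> bool) \<Rightarrow> 'v set \<Rightarrow> ('v set \<Rightarrow> bool)" where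
  "flipE \<eta> e = \<eta>(e := \<not> \<eta> e)"

definition flipS :: "('v \<Rightarrow> int) \<Rightarrow> 'v \<Rightarrow> ('v \<Rightarrow> int)" where
  "flipS \<sigma> x = \<sigma>(x := - \<sigma> x)"

definition compat :: "'v set set \<Rightarrow> 'v config \<Rightarrow> bool" where
  "compat E c \<longleftrightarrow> (\<forall>e\<in>E. fst c e \<longrightarrow> agree (snd c) e)"

definition states :: "'v set set \<Rightarrow> 'v config set" where
  "states E = {(\<eta>, \<sigma>). (\<forall>f. \<eta> f \<longrightarrow> f \<in> E) \<and> (\<forall>x. \<sigma> x = 1 \<or> \<sigma> x = -1)}"

definition weight :: "'v set set \<Rightarrow> real \<Rightarrow> 'v config \<Rightarrow> real" where
  "weight E p c = (\<Prod>e\<in>E. (if fst c e then (if agree (snd c) e then p else 0) else 1 - p))"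

definition IP :: "'v set set \<Rightarrow> real \<Rightarrow> 'v config \<Rightarrow> real" where
  "IP E p c = (if c \<in> states E then weight E p c / (\<Sum>d\<in>states E. weight E p d) else 0)"

definition ind :: "bool \<Rightarrow> real" where
  "ind b = (if b then 1 else 0)"

definition rate :: "'v set set \<Rightarrow> real \<Rightarrow> 'v config \<Rightarrow> 'v config \<Rightarrow> real" where
  "rate E p c c' = (let \<eta> = fst c; \<sigma> = snd c; \<eta>' = fst c'; \<sigma>' = snd c' in
     if \<sigma>' = \<sigma> \<and> (\<exists>e\<in>E. \<eta>' = flipE \<eta> e \<and> gamma E \<eta> e) then
       (let e = (SOME e. e \<in> E \<and> \<eta>' = flipE \<eta> e \<and> gamma E \<eta> e) in
         ((1 - p) * ind (\<eta> e) + p * ind (\<not> \<eta> e)) * ind (compat E c))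
     else if \<sigma>' = \<sigma> \<and> (\<exists>e\<in>E. \<eta>' = flipE \<eta> e \<and> \<not> gamma E \<eta> e \<and> agree \<sigma> e) then
       (let e = (SOME e. e \<in> E \<and> \<eta>' = flipE \<eta> e \<and> \<not> gamma E \<eta> e \<and> agree \<sigma> e) in
         1/2 * ((1 - p) * ind (\<eta> e) + p * ind (\<not> \<eta> e)) * ind (compat E c))
     else if (\<exists>x. \<exists>e\<in>incident E x. \<sigma>' = flipS \<sigma> x \<and> \<eta>' = flipE \<eta> e \<and> \<not> gamma E \<eta> e
                \<and> \<eta> e = agree \<sigma> e \<and> (\<forall>f\<in>incident E x - {e}. \<not> \<eta> f)) then
       (let xe = (SOME (x, e). e \<in> incident E x \<and> \<sigma>' = flipS \<sigma> x \<and> \<eta>' = flipE \<eta> e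
                \<and> \<not> gamma E \<eta> e \<and> \<eta> e = agree \<sigma> e \<and> (\<forall>f\<in>incident E x - {e}. \<not> \<eta> f));
            e = snd xe in
         1/4 * ((1 - p) * ind (\<eta> e) * ind (compat E c) + p * ind (\<not> \<eta> e) * ind (compat E c')))
     else 0)"

definition Qgen :: "'v set set \<Rightarrow> real \<Rightarrow> 'v config \<Rightarrow> 'v config \<Rightarrow> real" where
  "Qgen E p c c' = (if c = c' then - (\<Sum>d\<in>states E - {c}. rate E p c d) else rate E p c c')"

fun Qpow :: "'v set set \<Rightarrow> real \<Rightarrow> nat \<Rightarrow> 'v config \<Rightarrow> 'v config \<Rightarrow> real" where
  "Qpow E p 0 c c' = (if c = c' then 1 else 0)"
| "Qpow E p (Suc n) c c' = (\<Sum>d\<in>states E. Qpow E p n c d * Qgen E p d c')"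

definition Pt :: "'v set set \<Rightarrow> real \<Rightarrow> real \<Rightarrow> 'v config \<Rightarrow> 'v config \<Rightarrow> real" where
  "Pt E p t c c' = (\<Sum>n. t ^ n / fact n * Qpow E p n c c')"

end

theory Submission
  imports Defs
begin

lemma flipE_inj: "flipE \<eta> e = flipE \<eta> e' \<Longrightarrow> e = e'"
  unfolding flipE_def by (metis fun_upd_apply)

lemma flipS_inj: "\<sigma> x \<noteq> 0 \<Longrightarrow> flipS \<sigma> x = flipS \<sigma> x' \<Longrightarrow> x = x'"
  unfolding flipS_def by (metis fun_upd_apply neg_equal_zero)

lemma flipS_neq: "\<sigma> x \<noteq> 0 \<Longrightarrow> flipS \<sigma> x \<noteq> \<sigma>"
  unfolding flipS_def by (metis fun_upd_same neg_equal_zero)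

lemma flipE_flipE[simp]: "flipE (flipE \<eta> e) e = \<eta>"
  unfolding flipE_def by auto

lemma flipS_flipS[simp]: "flipS (flipS \<sigma> x) x = \<sigma>"
  unfolding flipS_def by auto

lemma open_rel_flip[simp]: "open_rel E (flipE \<eta> e) e = open_rel E \<eta> e"
  unfolding open_rel_def flipE_def by auto

lemma gamma_flip[simp]: "gamma E (flipE \<eta> e) e = gamma E \<eta> e"
  unfolding gamma_def by simp

lemma agree_pair: "agree \<sigma> {u, w} \<longleftrightarrow> \<sigma> u = \<sigma> w"
  unfolding agree_def by auto

lemma agree_flipS_notin: "x \<notin> f \<Longrightarrow> agree (flipS \<sigma> x) f = agree \<sigma> f"
  unfolding agree_def flipS_def by auto

lemma agree_flipS_edge:
  assumes "x \<noteq> y" "\<sigma> x = 1 \<or> \<sigma> x = -1" "\<sigma> y = 1 \<or> \<sigma> y = -1"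
  shows "agree (flipS \<sigma> x) {x, y} = (\<not> agree \<sigma> {x, y})"
  using assms unfolding agree_pair flipS_def by auto

lemma path_agree:
  assumes "(u, w) \<in> (open_rel E \<eta> e)\<^sup>*" "compat E (\<eta>, \<sigma>)"
  shows "\<sigma> u = \<sigma> w"
  using assms(1)
proof (induction rule: rtrancl_induct)
  case base then show ?case by simp
next
  case (step y z)
  then obtain f where "f \<in> E" "\<eta> f" "f = {y, z}" unfolding open_rel_def by auto
  with assms(2) have "\<sigma> y = \<sigma> z" unfolding compat_def by (auto simp: agree_pair)
  with step show ?case by simp
qed

lemma gamma_agree: "gamma E \<eta> e \<Longrightarrow> compat E (\<eta>, \<sigma>) \<Longrightarrow> agree \<sigma> e"
  unfolding gamma_def using path_agree by (metis agree_pair)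

lemma gamma_isolated:
  assumes "e = {x, y}" "x \<noteq> y" "\<forall>f\<in>incident E x - {e}. \<not> \<eta> f"
  shows "\<not> gamma E \<eta> e"
proof
  assume "gamma E \<eta> e"
  then obtain u w where uw: "e = {u, w}" "(u, w) \<in> (open_rel E \<eta> e)\<^sup>*" unfolding gamma_def by auto
  have no: "False" if "(x, z) \<in> open_rel E \<eta> e \<or> (z, x) \<in> open_rel E \<eta> e" for z
    using that assms(3) unfolding open_rel_def incident_def by auto
  from uw assms(1,2) have "u = x \<and> w = y \<or> u = y \<and> w = x" by (auto simp: doubleton_eq_iff)
  then show False
  proof
    assume "u = x \<and> w = y"
    with uw(2) assms(2) show False
      by (metis converse_rtranclE no)
  next
    assume "u = y \<and> w = x"
    with uw(2) assms(2) show False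
      by (metis rtranclE no)
  qed
qed

definition base :: "real \<Rightarrow> bool \<Rightarrow> real" where
  "base p b = (1 - p) * ind b + p * ind (\<not> b)"

lemma rate_A:
  assumes e: "e \<in> E" and sp: "\<forall>v. \<sigma> v \<noteq> 0"
  shows "rate E p (\<eta>, \<sigma>) (flipE \<eta> e, \<sigma>) =
     (if gamma E \<eta> e then base p (\<eta> e) * ind (compat E (\<eta>, \<sigma>))
      else if agree \<sigma> e then 1/2 * base p (\<eta> e) * ind (compat E (\<eta>, \<sigma>)) else 0)"
proof -
  have c1: "(\<exists>e'\<in>E. flipE \<eta> e = flipE \<eta> e' \<and> gamma E \<eta> e') \<longleftrightarrow> gamma E \<eta> e"
    using e flipE_inj by metis
  have s1: "(SOME e'. e' \<in> E \<and> flipE \<eta> e = flipE \<eta> e' \<and> gamma E \<eta> e') = e" if "gamma E \<eta> e"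
    using that e flipE_inj by (intro some_equality) auto
  have c2: "(\<exists>e'\<in>E. flipE \<eta> e = flipE \<eta> e' \<and> \<not> gamma E \<eta> e' \<and> agree \<sigma> e') \<longleftrightarrow> \<not> gamma E \<eta> e \<and> agree \<sigma> e"
    using e flipE_inj by metis
  have s2: "(SOME e'. e' \<in> E \<and> flipE \<eta> e = flipE \<eta> e' \<and> \<not> gamma E \<eta> e' \<and> agree \<sigma> e') = e"
    if "\<not> gamma E \<eta> e \<and> agree \<sigma> e"
    using that e flipE_inj by (intro some_equality) auto
  have c3: "\<not> (\<sigma> = flipS \<sigma> x)" for x using flipS_neq sp by metis
  show ?thesis
    unfolding rate_def Let_def fst_conv snd_conv
    using c1 s1 c2 s2 c3 by (auto simp: base_def)
qed

lemma rate_B: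
  assumes e: "e \<in> incident E x" and sp: "\<forall>v. \<sigma> v \<noteq> 0"
  shows "rate E p (\<eta>, \<sigma>) (flipE \<eta> e, flipS \<sigma> x) =
     (if \<not> gamma E \<eta> e \<and> \<eta> e = agree \<sigma> e \<and> (\<forall>f\<in>incident E x - {e}. \<not> \<eta> f)
      then 1/4 * ((1 - p) * ind (\<eta> e) * ind (compat E (\<eta>, \<sigma>))
                 + p * ind (\<not> \<eta> e) * ind (compat E (flipE \<eta> e, flipS \<sigma> x)))
      else 0)"
proof -
  define P where "P = (\<lambda>(x', e'). e' \<in> incident E x' \<and> flipS \<sigma> x = flipS \<sigma> x' \<and> flipE \<eta> e = flipE \<eta> e'
                \<and> \<not> gamma E \<eta> e' \<and> \<eta> e' = agree \<sigma> e' \<and> (\<forall>f\<in>incident E x' - {e'}. \<not> \<eta> f))"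
  have n1: "flipS \<sigma> x \<noteq> \<sigma>" using flipS_neq sp by metis
  have c3: "(\<exists>x'. \<exists>e'\<in>incident E x'. flipS \<sigma> x = flipS \<sigma> x' \<and> flipE \<eta> e = flipE \<eta> e' \<and> \<not> gamma E \<eta> e'
                \<and> \<eta> e' = agree \<sigma> e' \<and> (\<forall>f\<in>incident E x' - {e'}. \<not> \<eta> f))
        \<longleftrightarrow> (\<not> gamma E \<eta> e \<and> \<eta> e = agree \<sigma> e \<and> (\<forall>f\<in>incident E x - {e}. \<not> \<eta> f))"
    using e flipE_inj flipS_inj sp by metis
  have s3: "(SOME xe. P xe) = (x, e)" if "\<not> gamma E \<eta> e \<and> \<eta> e = agree \<sigma> e \<and> (\<forall>f\<in>incident E x - {e}. \<not> \<eta> f)"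
  proof (rule some_equality)
    show "P (x, e)" using that e unfolding P_def by auto
    fix xe assume "P xe"
    moreover obtain a b where ab: "xe = (a, b)" by fastforce
    ultimately have "b \<in> incident E a" "flipS \<sigma> x = flipS \<sigma> a" "flipE \<eta> e = flipE \<eta> b"
      unfolding P_def by auto
    then show "xe = (x, e)" using ab flipE_inj flipS_inj[of \<sigma> x] sp by metis
  qed
  show ?thesis
    unfolding rate_def Let_def fst_conv snd_conv
    using n1 c3 s3 unfolding P_def by auto
qed

lemma rate_zero:
  assumes "rate E p c c' \<noteq> 0"
  shows "(snd c' = snd c \<and> (\<exists>e\<in>E. fst c' = flipE (fst c) e))
       \<or> (\<exists>x. \<exists>e\<in>incident E x. snd c' = flipS (snd c) x \<and> fst c' = flipE (fst c) e)"
  using assms unfolding rate_def Let_def by (auto split: if_splits)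

definition F :: "real \<Rightarrow> ('v \<Rightarrow> int) \<Rightarrow> 'v set \<Rightarrow> bool \<Rightarrow> real" where
  "F p \<sigma> e b = (if b then (if agree \<sigma> e then p else 0) else 1 - p)"

lemma weight_F: "weight E p (\<eta>, \<sigma>) = (\<Prod>f\<in>E. F p \<sigma> f (\<eta> f))"
  unfolding weight_def F_def by (simp only: fst_conv snd_conv)

lemma weight_split:
  fixes E :: "'v::finite set set"
  assumes "e \<in> E"
  shows "weight E p (\<eta>, \<sigma>) = F p \<sigma> e (\<eta> e) * (\<Prod>f\<in>E-{e}. F p \<sigma> f (\<eta> f))"
  unfolding weight_F using assms by (simp add: prod.remove)

lemma weight_split_flip:
  fixes E :: "'v::finite set set"
  assumes "e \<in> E"
  shows "weight E p (flipE \<eta> e, \<sigma>) = F p \<sigma> e (\<not> \<eta> e) * (\<Prod>f\<in>E-{e}. F p \<sigma> f (\<eta> f))"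
proof -
  have "(\<Prod>f\<in>E-{e}. F p \<sigma> f (flipE \<eta> e f)) = (\<Prod>f\<in>E-{e}. F p \<sigma> f (\<eta> f))"
    by (rule prod.cong) (auto simp: flipE_def)
  then show ?thesis using weight_split[OF assms, where \<eta>="flipE \<eta> e" and p=p and \<sigma>=\<sigma>] by (simp add: flipE_def)
qed

lemma compat_flip_open:
  assumes "e \<in> E" "\<not> \<eta> e"
  shows "compat E (flipE \<eta> e, \<sigma>) \<longleftrightarrow> compat E (\<eta>, \<sigma>) \<and> agree \<sigma> e"
  using assms unfolding compat_def flipE_def by auto

lemma DB1:
  fixes E :: "'v::finite set set"
  assumes e: "e \<in> E" and ne: "\<not> \<eta> e" and sp: "\<forall>v. \<sigma> v \<noteq> 0"
  shows "weight E p (\<eta>, \<sigma>) * rate E p (\<eta>, \<sigma>) (flipE \<eta> e, \<sigma>)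
       = weight E p (flipE \<eta> e, \<sigma>) * rate E p (flipE \<eta> e, \<sigma>) (\<eta>, \<sigma>)"
proof -
  define W where "W = (\<Prod>f\<in>E-{e}. F p \<sigma> f (\<eta> f))"
  have r2: "rate E p (flipE \<eta> e, \<sigma>) (\<eta>, \<sigma>) = rate E p (flipE \<eta> e, \<sigma>) (flipE (flipE \<eta> e) e, \<sigma>)"
    by simp
  have fe: "flipE \<eta> e e" using ne by (simp add: flipE_def)
  have ga: "gamma E \<eta> e \<Longrightarrow> compat E (\<eta>, \<sigma>) \<Longrightarrow> agree \<sigma> e" by (rule gamma_agree)
  have cf: "compat E (flipE \<eta> e, \<sigma>) \<longleftrightarrow> compat E (\<eta>, \<sigma>) \<and> agree \<sigma> e"
    using compat_flip_open[where \<eta>=\<eta> and e=e and E=E and \<sigma>=\<sigma>] e ne by blast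
  have b1: "base p (\<eta> e) = p" "base p (flipE \<eta> e e) = 1 - p" using ne fe by (simp_all add: base_def ind_def)
  have f1: "F p \<sigma> e (\<eta> e) = 1 - p" "F p \<sigma> e (\<not> \<eta> e) = (if agree \<sigma> e then p else 0)"
    using ne by (simp_all add: F_def)
  show ?thesis
    unfolding r2 rate_A[OF e sp] rate_A[OF e sp, where \<eta>="flipE \<eta> e"] gamma_flip
      weight_split_flip[OF e] weight_split[OF e, where \<eta>=\<eta>] W_def[symmetric] b1 f1
    using ga cf
    by (cases "gamma E \<eta> e"; cases "agree \<sigma> e"; cases "compat E (\<eta>, \<sigma>)") (simp_all add: ind_def)
qed

lemma DB2:
  fixes E :: "'v::finite set set"
  assumes g: "simple_graph E" and e: "e \<in> incident E x" and ne: "\<not> \<eta> e"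
    and sp: "\<forall>v. \<sigma> v = 1 \<or> \<sigma> v = -1"
  shows "weight E p (\<eta>, \<sigma>) * rate E p (\<eta>, \<sigma>) (flipE \<eta> e, flipS \<sigma> x)
       = weight E p (flipE \<eta> e, flipS \<sigma> x) * rate E p (flipE \<eta> e, flipS \<sigma> x) (\<eta>, \<sigma>)"
proof -
  have eE: "e \<in> E" using e unfolding incident_def by auto
  obtain y where y: "e = {x, y}" "x \<noteq> y"
    using e g unfolding incident_def simple_graph_def by (auto simp: doubleton_eq_iff)
  define \<sigma>' where "\<sigma>' = flipS \<sigma> x"
  have sp0: "\<forall>v. \<sigma> v \<noteq> 0" using sp by (metis zero_neq_neg_one zero_neq_one)
  have sp': "\<forall>v. \<sigma>' v \<noteq> 0" using sp0 unfolding \<sigma>'_def flipS_def by auto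
  have ag: "agree \<sigma>' e = (\<not> agree \<sigma> e)" unfolding \<sigma>'_def y
    by (rule agree_flipS_edge) (use y sp in auto)
  have r2: "rate E p (flipE \<eta> e, \<sigma>') (\<eta>, \<sigma>) = rate E p (flipE \<eta> e, \<sigma>') (flipE (flipE \<eta> e) e, flipS \<sigma>' x)"
    by (simp add: \<sigma>'_def)
  have fe: "flipE \<eta> e e" using ne by (simp add: flipE_def)
  have oth: "(\<forall>f\<in>incident E x - {e}. \<not> flipE \<eta> e f) \<longleftrightarrow> (\<forall>f\<in>incident E x - {e}. \<not> \<eta> f)"
    by (auto simp: flipE_def)
  have WW: "(\<Prod>f\<in>E-{e}. F p \<sigma> f (\<eta> f)) = (\<Prod>f\<in>E-{e}. F p \<sigma>' f (\<eta> f))"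
    if "\<forall>f\<in>incident E x - {e}. \<not> \<eta> f"
  proof (rule prod.cong)
    fix f assume f: "f \<in> E - {e}"
    show "F p \<sigma> f (\<eta> f) = F p \<sigma>' f (\<eta> f)"
    proof (cases "\<eta> f")
      case True
      then have "x \<notin> f" using that f unfolding incident_def by auto
      then show ?thesis unfolding F_def \<sigma>'_def by (simp add: agree_flipS_notin)
    qed (simp add: F_def)
  qed simp
  have f1: "F p \<sigma> e (\<eta> e) = 1 - p" "F p \<sigma>' e (\<not> \<eta> e) = (if agree \<sigma>' e then p else 0)"
    using ne by (simp_all add: F_def)
  have i1: "ind (\<eta> e) = 0" "ind (\<not> \<eta> e) = 1" "ind (flipE \<eta> e e) = 1" "ind (\<not> flipE \<eta> e e) = 0"
    using ne fe by (simp_all add: ind_def)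
  have c1: "(\<not> gamma E \<eta> e \<and> \<eta> e = agree \<sigma> e \<and> (\<forall>f\<in>incident E x - {e}. \<not> \<eta> f))
     \<longleftrightarrow> (\<not> gamma E \<eta> e \<and> \<not> agree \<sigma> e \<and> (\<forall>f\<in>incident E x - {e}. \<not> \<eta> f))"
    using ne by auto
  have c2: "(\<not> gamma E (flipE \<eta> e) e \<and> flipE \<eta> e e = agree \<sigma>' e \<and> (\<forall>f\<in>incident E x - {e}. \<not> flipE \<eta> e f))
     \<longleftrightarrow> (\<not> gamma E \<eta> e \<and> \<not> agree \<sigma> e \<and> (\<forall>f\<in>incident E x - {e}. \<not> \<eta> f))"
    using fe ag oth by simp
  show ?thesis
    unfolding \<sigma>'_def[symmetric] r2 rate_B[OF e sp0, where \<eta>=\<eta> and p=p, folded \<sigma>'_def] rate_B[OF e sp', where \<eta>="flipE \<eta> e"]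
      weight_split_flip[OF eE] weight_split[OF eE, where \<eta>=\<eta>] c1 c2 f1 i1
    using WW ag
    by (cases "\<not> gamma E \<eta> e \<and> \<not> agree \<sigma> e \<and> (\<forall>f\<in>incident E x - {e}. \<not> \<eta> f)") (simp, force)
qed

lemma states_iff: "(\<eta>, \<sigma>) \<in> states E \<longleftrightarrow> (\<forall>f. \<eta> f \<longrightarrow> f \<in> E) \<and> (\<forall>x. \<sigma> x = 1 \<or> \<sigma> x = -1)"
  unfolding states_def by simp

lemma incident_sub: "incident E x \<subseteq> E" unfolding incident_def by auto

lemma flipE_states: "e \<in> E \<Longrightarrow> (\<forall>f. \<eta> f \<longrightarrow> f \<in> E) \<Longrightarrow> (\<forall>f. flipE \<eta> e f \<longrightarrow> f \<in> E)"
  unfolding flipE_def by auto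

lemma flipS_spins: "(\<forall>x. \<sigma> x = 1 \<or> \<sigma> x = -1) \<Longrightarrow> (\<forall>x. flipS \<sigma> v x = 1 \<or> flipS \<sigma> v x = -1)"
  unfolding flipS_def by auto

lemma flip_states1: assumes "e \<in> E" "(\<forall>f. \<eta> f \<longrightarrow> f \<in> E)" "(\<forall>x. \<sigma> x = 1 \<or> \<sigma> x = -1)"
  shows "(flipE \<eta> e, \<sigma>) \<in> states E"
  unfolding states_iff using flipE_states[OF assms(1,2)] assms(3) by (intro conjI)

lemma flip_states2: assumes "e \<in> E" "(\<forall>f. \<eta> f \<longrightarrow> f \<in> E)" "(\<forall>x. \<sigma> x = 1 \<or> \<sigma> x = -1)"
  shows "(flipE \<eta> e, flipS \<sigma> v) \<in> states E"
  unfolding states_iff using flipE_states[OF assms(1,2)] flipS_spins[OF assms(3)] by (intro conjI)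

lemma rate_pres:
  assumes "c \<in> states E" "rate E p c c' \<noteq> 0"
  shows "c' \<in> states E"
proof -
  obtain \<eta> \<sigma> where c: "c = (\<eta>, \<sigma>)" by fastforce
  obtain \<eta>' \<sigma>' where c': "c' = (\<eta>', \<sigma>')" by fastforce
  have h: "(\<forall>f. \<eta> f \<longrightarrow> f \<in> E)" "(\<forall>x. \<sigma> x = 1 \<or> \<sigma> x = -1)"
    using assms(1) unfolding c states_iff by auto
  from rate_zero[OF assms(2)] consider (a) e where "e \<in> E" "\<sigma>' = \<sigma>" "\<eta>' = flipE \<eta> e"
    | (b) x e where "e \<in> incident E x" "\<sigma>' = flipS \<sigma> x" "\<eta>' = flipE \<eta> e"
    unfolding c c' fst_conv snd_conv by blast
  then show ?thesis
  proof cases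
    case a
    show ?thesis unfolding c' a(2) a(3) by (rule flip_states1[OF a(1) h])
  next
    case b
    have e: "e \<in> E" using b(1) unfolding incident_def by simp
    show ?thesis unfolding c' b(2) b(3) by (rule flip_states2[OF e h])
  qed
qed

definition rel :: "'v set set \<Rightarrow> 'v config \<Rightarrow> 'v config \<Rightarrow> bool" where
  "rel E c c' \<longleftrightarrow> (snd c' = snd c \<and> (\<exists>e\<in>E. fst c' = flipE (fst c) e))
       \<or> (\<exists>x. \<exists>e\<in>incident E x. snd c' = flipS (snd c) x \<and> fst c' = flipE (fst c) e)"

lemma rel_sym: "rel E c c' \<Longrightarrow> rel E c' c"
proof -
  assume "rel E c c'"
  then consider (a) e where "e \<in> E" "snd c' = snd c" "fst c' = flipE (fst c) e"
    | (b) x e where "e \<in> incident E x" "snd c' = flipS (snd c) x" "fst c' = flipE (fst c) e"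
    unfolding rel_def by blast
  then show ?thesis
  proof cases
    case a
    then have "fst c = flipE (fst c') e" by simp
    with a show ?thesis unfolding rel_def by auto
  next
    case b
    then have "fst c = flipE (fst c') e" "snd c = flipS (snd c') x" by simp_all
    with b show ?thesis unfolding rel_def by auto
  qed
qed

lemma DBw:
  fixes E :: "'v::finite set set"
  assumes g: "simple_graph E" and S: "c \<in> states E" "c' \<in> states E" and r: "rel E c c'"
  shows "weight E p c * rate E p c c' = weight E p c' * rate E p c' c"
proof -
  obtain \<eta> \<sigma> where c: "c = (\<eta>, \<sigma>)" by fastforce
  obtain \<eta>' \<sigma>' where c': "c' = (\<eta>', \<sigma>')" by fastforce
  have sp: "\<forall>v. \<sigma> v = 1 \<or> \<sigma> v = -1" using S(1) c by (simp add: states_iff)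
  have sp': "\<forall>v. \<sigma>' v = 1 \<or> \<sigma>' v = -1" using S(2) c' by (simp add: states_iff)
  have sp0: "\<forall>v. \<sigma> v \<noteq> 0" "\<forall>v. \<sigma>' v \<noteq> 0" using sp sp' by (metis zero_neq_neg_one zero_neq_one)+
  from r consider (a) e where "e \<in> E" "\<sigma>' = \<sigma>" "\<eta>' = flipE \<eta> e"
    | (b) x e where "e \<in> incident E x" "\<sigma>' = flipS \<sigma> x" "\<eta>' = flipE \<eta> e"
    unfolding rel_def c c' by auto
  then show ?thesis
  proof cases
    case a
    show ?thesis
    proof (cases "\<eta> e")
      case False
      then show ?thesis unfolding c c' a using DB1[OF a(1), where \<eta>=\<eta> and \<sigma>=\<sigma> and p=p] False sp0(1) by simp
    next
      case True
      then have ne: "\<not> \<eta>' e" using a by (simp add: flipE_def)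
      have "\<eta> = flipE \<eta>' e" using a by simp
      then show ?thesis unfolding c c' a(2) using DB1[OF a(1), where \<eta>=\<eta>' and \<sigma>=\<sigma> and p=p] ne sp0(1) a(2) by simp
    qed
  next
    case b
    show ?thesis
    proof (cases "\<eta> e")
      case False
      then show ?thesis unfolding c c' b using DB2[OF g b(1), where \<eta>=\<eta> and \<sigma>=\<sigma> and p=p] False sp by simp
    next
      case True
      then have ne: "\<not> \<eta>' e" using b by (simp add: flipE_def)
      have "\<eta> = flipE \<eta>' e" "\<sigma> = flipS \<sigma>' x" using b by simp_all
      then show ?thesis unfolding c c' using DB2[OF g b(1), where \<eta>=\<eta>' and \<sigma>=\<sigma>' and p=p] ne sp' by simp
    qed
  qed
qed

lemma DB:
  fixes E :: "'v::finite set set"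
  assumes g: "simple_graph E"
  shows "IP E p c * rate E p c c' = IP E p c' * rate E p c' c"
proof (cases "c \<in> states E \<and> c' \<in> states E")
  case True
  show ?thesis
  proof (cases "rel E c c'")
    case r: True
    show ?thesis unfolding IP_def using True DBw[OF g _ _ r, of p] by simp
  next
    case False
    then have "\<not> rel E c' c" using rel_sym by blast
    with False have "rate E p c c' = 0" "rate E p c' c = 0"
      using rate_zero unfolding rel_def by blast+
    then show ?thesis by simp
  qed
next
  case False
  have "IP E p c * rate E p c c' = 0"
  proof (cases "c \<in> states E")
    case True
    then have "rate E p c c' = 0" using False rate_pres by blast
    then show ?thesis by simp
  qed (simp add: IP_def)
  moreover have "IP E p c' * rate E p c' c = 0"
  proof (cases "c' \<in> states E")
    case True
    then have "rate E p c' c = 0" using False rate_pres by blast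
    then show ?thesis by simp
  qed (simp add: IP_def)
  ultimately show ?thesis by (metis mult_zero_left mult_zero_right)
qed

lemma finite_states: "finite (states (E :: 'v::finite set set))"
proof -
  have f1: "finite (Pi UNIV (\<lambda>_::'v. {1::int, -1}))"
    using finite_PiE[of "UNIV::'v set" "\<lambda>_. {1::int, -1}"] by (simp add: PiE_UNIV_domain)
  have "states E \<subseteq> UNIV \<times> Pi UNIV (\<lambda>_::'v. {1::int, -1})"
    unfolding states_def by auto
  moreover have "finite (UNIV \<times> Pi UNIV (\<lambda>_::'v. {1::int, -1}) :: 'v config set)"
    using f1 by simp
  ultimately show ?thesis by (rule finite_subset)
qed

lemma statQ:
  fixes E :: "'v::finite set set"
  assumes g: "simple_graph E"
  shows "(\<Sum>c\<in>states E. IP E p c * Qgen E p c c') = 0"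
proof -
  define S where "S = states E"
  have fS: "finite S" unfolding S_def by (rule finite_states)
  have off: "(\<Sum>c\<in>S-{c'}. IP E p c * rate E p c c') = IP E p c' * (\<Sum>d\<in>S-{c'}. rate E p c' d)"
    unfolding sum_distrib_left using DB[OF g] by (intro sum.cong) auto
  show ?thesis
  proof (cases "c' \<in> S")
    case True
    have "(\<Sum>c\<in>S. IP E p c * Qgen E p c c') = IP E p c' * Qgen E p c' c' + (\<Sum>c\<in>S-{c'}. IP E p c * Qgen E p c c')"
      using True fS by (simp add: sum.remove)
    also have "(\<Sum>c\<in>S-{c'}. IP E p c * Qgen E p c c') = (\<Sum>c\<in>S-{c'}. IP E p c * rate E p c c')"
      by (intro sum.cong) (auto simp: Qgen_def)
    finally show ?thesis unfolding S_def[symmetric] off by (simp add: Qgen_def S_def)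
  next
    case False
    then have "IP E p c' = 0" unfolding IP_def S_def by simp
    have "(\<Sum>c\<in>S. IP E p c * Qgen E p c c') = (\<Sum>c\<in>S-{c'}. IP E p c * rate E p c c')"
      using False by (intro sum.cong) (auto simp: Qgen_def)
    then show ?thesis unfolding S_def[symmetric] off \<open>IP E p c' = 0\<close> by simp
  qed
qed

lemma statQpow:
  fixes E :: "'v::finite set set"
  assumes g: "simple_graph E"
  shows "(\<Sum>c\<in>states E. IP E p c * Qpow E p n c c') = (if n = 0 then IP E p c' else 0)"
proof (induction n arbitrary: c')
  case 0
  show ?case
  proof (cases "c' \<in> states E")
    case True
    then show ?thesis using finite_states[of E] by (simp add: if_distrib cong: if_cong)
  next
    case False
    have s0: "(\<Sum>c\<in>states E. IP E p c * Qpow E p 0 c c') = 0"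
      by (intro sum.neutral) (use False in auto)
    moreover have "IP E p c' = 0" using False by (simp add: IP_def)
    ultimately show ?thesis by simp
  qed
next
  case (Suc n)
  have "(\<Sum>c\<in>states E. IP E p c * Qpow E p (Suc n) c c')
      = (\<Sum>d\<in>states E. (\<Sum>c\<in>states E. IP E p c * Qpow E p n c d) * Qgen E p d c')"
  proof -
    have "(\<Sum>c\<in>states E. IP E p c * Qpow E p (Suc n) c c')
        = (\<Sum>c\<in>states E. \<Sum>d\<in>states E. IP E p c * Qpow E p n c d * Qgen E p d c')"
      by (simp add: sum_distrib_left mult.assoc)
    also have "\<dots> = (\<Sum>d\<in>states E. \<Sum>c\<in>states E. IP E p c * Qpow E p n c d * Qgen E p d c')"
      by (rule sum.swap)
    also have "\<dots> = (\<Sum>d\<in>states E. (\<Sum>c\<in>states E. IP E p c * Qpow E p n c d) * Qgen E p d c')"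
      by (simp add: sum_distrib_right)
    finally show ?thesis .
  qed
  also have "\<dots> = (if n = 0 then 0 else 0)"
    using Suc.IH statQ[OF g, of p c'] by (cases "n = 0") simp_all
  finally show ?case by simp
qed

lemma gen_if: "P f1 \<Longrightarrow> P f2 \<Longrightarrow> P f3 \<Longrightarrow> P 0 \<Longrightarrow> P (if A then f1 else if B then f2 else if C then f3 else 0)"
  by simp

lemma rate_bounds:
  assumes p0: "0 \<le> p" and p1: "p \<le> 1"
  shows "0 \<le> rate E p c c' \<and> rate E p c c' \<le> 1"
proof -
  have b1: "0 \<le> ((1-p)*ind a + p*ind(\<not>a))*ind c \<and> ((1-p)*ind a + p*ind(\<not>a))*ind c \<le> 1" for a c
    using p0 p1 by (cases a; cases c) (simp_all add: ind_def)
  have b2: "0 \<le> 1/2*((1-p)*ind a + p*ind(\<not>a))*ind c \<and> 1/2*((1-p)*ind a + p*ind(\<not>a))*ind c \<le> 1" for a c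
    using p0 p1 by (cases a; cases c) (simp_all add: ind_def)
  have b3: "0 \<le> 1/4*((1-p)*ind a*ind c + p*ind(\<not>a)*ind d) \<and> 1/4*((1-p)*ind a*ind c + p*ind(\<not>a)*ind d) \<le> 1" for a c d
    using p0 p1 by (cases a; cases c; cases d) (simp_all add: ind_def)
  show ?thesis
    unfolding rate_def Let_def
    apply (rule gen_if[where P="\<lambda>r. 0 \<le> r \<and> r \<le> 1"])
       apply (rule b1)
      apply (rule b2)
     apply (rule b3)
    by simp
qed

lemma Qgen_bound:
  fixes E :: "'v::finite set set"
  assumes p0: "0 \<le> p" and p1: "p \<le> 1"
  shows "\<bar>Qgen E p c c'\<bar> \<le> real (card (states E)) + 1"
proof (cases "c = c'")
  case True
  have "(\<Sum>d\<in>states E - {c}. rate E p c d) \<le> (\<Sum>d\<in>states E - {c}. 1)"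
    by (intro sum_mono) (use rate_bounds[OF p0 p1] in blast)
  also have "\<dots> \<le> real (card (states E))"
    using card_Diff1_le[of "states E" c] by simp
  finally have u: "(\<Sum>d\<in>states E - {c}. rate E p c d) \<le> real (card (states E))" .
  have l: "0 \<le> (\<Sum>d\<in>states E - {c}. rate E p c d)"
    by (intro sum_nonneg) (use rate_bounds[OF p0 p1] in blast)
  show ?thesis using True u l by (simp add: Qgen_def)
next
  case False
  then show ?thesis using rate_bounds[OF p0 p1, of E c c'] by (simp add: Qgen_def)
qed

lemma Qpow_bound:
  fixes E :: "'v::finite set set"
  assumes p0: "0 \<le> p" and p1: "p \<le> 1"
  shows "\<bar>Qpow E p n c c'\<bar> \<le> (real (card (states E)) * (real (card (states E)) + 1)) ^ n"
proof (induction n arbitrary: c')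
  case 0
  then show ?case by simp
next
  case (Suc n)
  define N where "N = real (card (states E))"
  have "\<bar>Qpow E p (Suc n) c c'\<bar> \<le> (\<Sum>d\<in>states E. \<bar>Qpow E p n c d * Qgen E p d c'\<bar>)"
    by (simp add: sum_abs)
  also have "\<dots> \<le> (\<Sum>d\<in>states E. (N * (N + 1)) ^ n * (N + 1))"
    unfolding abs_mult N_def
    by (intro sum_mono mult_mono Suc.IH Qgen_bound[OF p0 p1]) auto
  also have "\<dots> = (N * (N + 1)) ^ Suc n"
    by (simp add: N_def)
  finally show ?case unfolding N_def .
qed

lemma Pt_summable:
  fixes E :: "'v::finite set set"
  assumes p0: "0 \<le> p" and p1: "p \<le> 1"
  shows "summable (\<lambda>n. Qpow E p n c c' / fact n * t ^ n)"
proof -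
  define B where "B = real (card (states E)) * (real (card (states E)) + 1)"
  have B0: "0 \<le> B" unfolding B_def by simp
  show ?thesis
  proof (rule summable_comparison_test')
    show "summable (\<lambda>n. inverse (fact n) * (B * \<bar>t\<bar>) ^ n)" by (rule summable_exp)
    fix n :: nat
    have "norm (Qpow E p n c c' / fact n * t ^ n) = \<bar>Qpow E p n c c'\<bar> * \<bar>t\<bar> ^ n / fact n"
      by (simp add: abs_mult power_abs)
    also have "\<dots> \<le> B ^ n * \<bar>t\<bar> ^ n / fact n"
      by (intro divide_right_mono mult_right_mono) (use Qpow_bound[OF p0 p1, where E=E and n=n and c=c and c'=c'] B_def in auto)
    also have "\<dots> = inverse (fact n) * (B * \<bar>t\<bar>) ^ n"
      by (simp add: power_mult_distrib divide_inverse)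
    finally show "norm (Qpow E p n c c' / fact n * t ^ n) \<le> inverse (fact n) * (B * \<bar>t\<bar>) ^ n" .
  qed
qed

lemma Pt_eq: "Pt E p t c c' = (\<Sum>n. Qpow E p n c c' / fact n * t ^ n)"
  unfolding Pt_def by (simp add: field_simps)

lemma Pt_stat:
  fixes E :: "'v::finite set set"
  assumes g: "simple_graph E" and p0: "0 \<le> p" and p1: "p \<le> 1"
  shows "(\<Sum>c\<in>states E. IP E p c * Pt E p t c c') = IP E p c'"
proof -
  have "(\<Sum>c\<in>states E. IP E p c * Pt E p t c c')
      = (\<Sum>c\<in>states E. \<Sum>n. IP E p c * (Qpow E p n c c' / fact n * t ^ n))"
    unfolding Pt_eq by (intro sum.cong refl suminf_mult[symmetric] Pt_summable[OF p0 p1])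
  also have "\<dots> = (\<Sum>n. \<Sum>c\<in>states E. IP E p c * (Qpow E p n c c' / fact n * t ^ n))"
    by (rule suminf_sum[symmetric]) (intro summable_mult Pt_summable[OF p0 p1])
  also have "\<dots> = (\<Sum>n. (\<Sum>c\<in>states E. IP E p c * Qpow E p n c c') / fact n * t ^ n)"
    by (simp add: sum_distrib_right sum_divide_distrib mult.assoc)
  also have "\<dots> = (\<Sum>n. if n = 0 then IP E p c' else 0)"
    unfolding statQpow[OF g] by (intro suminf_cong) simp
  also have "\<dots> = IP E p c'"
    using sums_single[of 0 "\<lambda>_. IP E p c'"] sums_unique by (simp add: sums_iff)
  finally show ?thesis .
qed

lemma Pt_deriv:
  fixes E :: "'v::finite set set"
  assumes p0: "0 \<le> p" and p1: "p \<le> 1" and ne: "c \<noteq> c'"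
  shows "((\<lambda>t. Pt E p t c c' / t) \<longlongrightarrow> Qpow E p 1 c c') (at_right 0)"
proof -
  define a where "a = (\<lambda>n. Qpow E p n c c' / fact n)"
  have d: "((\<lambda>t. \<Sum>n. a n * t ^ n) has_field_derivative (\<Sum>n. diffs a n * 0 ^ n)) (at 0)"
    by (rule termdiffs_strong_converges_everywhere) (unfold a_def, rule Pt_summable[OF p0 p1])
  have "(\<Sum>n. diffs a n * 0 ^ n) = Qpow E p 1 c c'"
    unfolding powser_zero by (simp add: diffs_def a_def)
  moreover have "(\<lambda>t. \<Sum>n. a n * t ^ n) = (\<lambda>t. Pt E p t c c')"
    unfolding a_def Pt_eq ..
  ultimately have d2: "((\<lambda>t. Pt E p t c c') has_field_derivative Qpow E p 1 c c') (at 0)"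
    using d by simp
  have z: "Pt E p 0 c c' = 0"
    unfolding Pt_eq using ne powser_zero[of "\<lambda>n. Qpow E p n c c' / fact n"] by simp
  have "((\<lambda>t. (Pt E p t c c' - Pt E p 0 c c') / (t - 0)) \<longlongrightarrow> Qpow E p 1 c c') (at 0)"
    using d2 unfolding has_field_derivative_iff .
  then have "((\<lambda>t. Pt E p t c c' / t) \<longlongrightarrow> Qpow E p 1 c c') (at 0)"
    unfolding z by simp
  then show ?thesis
    by (rule tendsto_mono[OF at_le[OF subset_UNIV]])
qed

definition H :: "'a set \<Rightarrow> ('a \<Rightarrow> bool) set" where
  "H E = {\<eta>. \<forall>f. \<eta> f \<longrightarrow> f \<in> E}"

lemma PS:
  fixes E :: "'a::finite set"
  shows "(\<Sum>\<eta>\<in>H E. \<Prod>f\<in>E. g f (\<eta> f)) = (\<Prod>f\<in>E. (g f True + g f False :: real))"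
  using finite[of E]
proof (induction E rule: finite_induct)
  case empty
  have h: "H {} = {\<lambda>_. False}" unfolding H_def by auto
  show ?case unfolding h by simp
next
  case (insert a E)
  define up where "up = (\<lambda>\<eta>::'a\<Rightarrow>bool. \<eta>(a := True))"
  have HE: "H (insert a E) = H E \<union> up ` H E"
  proof
    show "H (insert a E) \<subseteq> H E \<union> up ` H E"
    proof
      fix \<eta> assume h: "\<eta> \<in> H (insert a E)"
      show "\<eta> \<in> H E \<union> up ` H E"
      proof (cases "\<eta> a")
        case True
        then have "\<eta> = up (\<eta>(a := False))" unfolding up_def by (auto simp: fun_eq_iff)
        moreover have "\<eta>(a := False) \<in> H E" using h unfolding H_def by auto
        ultimately show ?thesis by blast
      next
        case False
        then have "\<eta> \<in> H E" using h unfolding H_def by auto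
        then show ?thesis by blast
      qed
    qed
    show "H E \<union> up ` H E \<subseteq> H (insert a E)" unfolding H_def up_def by (auto split: if_splits)
  qed
  have na: "\<not> \<eta> a" if "\<eta> \<in> H E" for \<eta> using that insert(2) unfolding H_def by auto
  have disj: "H E \<inter> up ` H E = {}"
  proof (rule equals0I)
    fix z assume "z \<in> H E \<inter> up ` H E"
    then obtain \<eta> where z: "z = up \<eta>" "z \<in> H E" by auto
    from z(1) have "z a" unfolding up_def by simp
    with na[OF z(2)] show False by simp
  qed
  have inj: "inj_on up (H E)"
  proof
    fix \<eta> \<eta>' assume h: "\<eta> \<in> H E" "\<eta>' \<in> H E" and eq: "up \<eta> = up \<eta>'"
    show "\<eta> = \<eta>'"
    proof (rule ext)
      fix f
      show "\<eta> f = \<eta>' f"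
      proof (cases "f = a")
        case True then show ?thesis using na[OF h(1)] na[OF h(2)] by simp
      next
        case False then show ?thesis using fun_cong[OF eq, of f] unfolding up_def by simp
      qed
    qed
  qed
  have p1: "(\<Prod>f\<in>insert a E. g f (\<eta> f)) = g a False * (\<Prod>f\<in>E. g f (\<eta> f))" if "\<eta> \<in> H E" for \<eta>
    using insert(1,2) na[OF that] by simp
  have p2: "(\<Prod>f\<in>insert a E. g f (up \<eta> f)) = g a True * (\<Prod>f\<in>E. g f (\<eta> f))" for \<eta>
  proof -
    have "(\<Prod>f\<in>E. g f (up \<eta> f)) = (\<Prod>f\<in>E. g f (\<eta> f))"
      using insert(2) by (intro prod.cong) (auto simp: up_def)
    then show ?thesis using insert(1,2) by (simp add: up_def)
  qed
  have "(\<Sum>\<eta>\<in>H (insert a E). \<Prod>f\<in>insert a E. g f (\<eta> f))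
      = (\<Sum>\<eta>\<in>H E. \<Prod>f\<in>insert a E. g f (\<eta> f)) + (\<Sum>\<eta>\<in>up ` H E. \<Prod>f\<in>insert a E. g f (\<eta> f))"
    unfolding HE by (rule sum.union_disjoint) (auto simp: disj)
  also have "(\<Sum>\<eta>\<in>up ` H E. \<Prod>f\<in>insert a E. g f (\<eta> f)) = (\<Sum>\<eta>\<in>H E. \<Prod>f\<in>insert a E. g f (up \<eta> f))"
    by (rule sum.reindex[OF inj, unfolded comp_def])
  also have "(\<Sum>\<eta>\<in>H E. \<Prod>f\<in>insert a E. g f (\<eta> f)) = (\<Sum>\<eta>\<in>H E. g a False * (\<Prod>f\<in>E. g f (\<eta> f)))"
    by (intro sum.cong refl p1)
  also have "(\<Sum>\<eta>\<in>H E. \<Prod>f\<in>insert a E. g f (up \<eta> f)) = (\<Sum>\<eta>\<in>H E. g a True * (\<Prod>f\<in>E. g f (\<eta> f)))"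
    by (intro sum.cong refl p2)
  finally show ?case
    using insert by (simp add: sum_distrib_left[symmetric] distrib_right)
qed

lemma prod_ind: "finite A \<Longrightarrow> (\<Prod>f\<in>A. ind (Q f)) = ind (\<forall>f\<in>A. Q f)"
  by (induction A rule: finite_induct) (auto simp: ind_def)

definition T :: "real \<Rightarrow> ('v \<Rightarrow> int) \<Rightarrow> 'v set \<Rightarrow> real" where
  "T p \<sigma> f = F p \<sigma> f True + F p \<sigma> f False"

lemma constrained_sum:
  fixes E :: "'v::finite set set"
  assumes A: "A \<subseteq> E"
  shows "(\<Sum>\<eta>\<in>H E. weight E p (\<eta>, \<sigma>) * ind (\<forall>f\<in>A. \<eta> f = b f))
       = (\<Prod>f\<in>A. F p \<sigma> f (b f)) * (\<Prod>f\<in>E - A. T p \<sigma> f)"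
proof -
  define g where "g = (\<lambda>f v. F p \<sigma> f v * (if f \<in> A then ind (v = b f) else 1))"
  have "weight E p (\<eta>, \<sigma>) * ind (\<forall>f\<in>A. \<eta> f = b f) = (\<Prod>f\<in>E. g f (\<eta> f))" for \<eta>
  proof -
    have "(\<Prod>f\<in>E. g f (\<eta> f)) = weight E p (\<eta>, \<sigma>) * (\<Prod>f\<in>E. (if f \<in> A then ind (\<eta> f = b f) else 1))"
      unfolding g_def weight_F prod.distrib ..
    also have "(\<Prod>f\<in>E. (if f \<in> A then ind (\<eta> f = b f) else 1)) = (\<Prod>f\<in>A. ind (\<eta> f = b f))"
      using A by (simp add: prod.If_cases Int_absorb1)
    also have "\<dots> = ind (\<forall>f\<in>A. \<eta> f = b f)" by (rule prod_ind) simp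
    finally show ?thesis by simp
  qed
  then have "(\<Sum>\<eta>\<in>H E. weight E p (\<eta>, \<sigma>) * ind (\<forall>f\<in>A. \<eta> f = b f)) = (\<Prod>f\<in>E. g f True + g f False)"
    using PS[where E=E and g=g] by simp
  also have "\<dots> = (\<Prod>f\<in>E. if f \<in> A then F p \<sigma> f (b f) else T p \<sigma> f)"
    by (intro prod.cong refl) (auto simp: g_def T_def ind_def)
  also have "\<dots> = (\<Prod>f\<in>A. F p \<sigma> f (b f)) * (\<Prod>f\<in>E - A. T p \<sigma> f)"
    using A by (simp add: prod.If_cases Int_absorb1 Diff_eq)
  finally show ?thesis .
qed

lemma weight_compat:
  fixes E :: "'v::finite set set"
  assumes "\<not> compat E (\<eta>, \<sigma>)"
  shows "weight E p (\<eta>, \<sigma>) = 0"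
proof -
  from assms obtain e where e: "e \<in> E" "\<eta> e" "\<not> agree \<sigma> e" unfolding compat_def by auto
  have "F p \<sigma> e (\<eta> e) = 0" using e by (simp add: F_def)
  then show ?thesis unfolding weight_F using e(1) by (intro prod_zero) auto
qed

lemma compat_flip2:
  assumes c: "compat E (\<eta>, \<sigma>)" and e: "e = {x, y}" "x \<noteq> y" "e \<in> E"
    and ne: "\<not> \<eta> e" and oth: "\<forall>f\<in>incident E x - {e}. \<not> \<eta> f"
    and na: "\<not> agree \<sigma> e" and sp: "\<forall>v. \<sigma> v = 1 \<or> \<sigma> v = -1"
  shows "compat E (flipE \<eta> e, flipS \<sigma> x)"
  unfolding compat_def fst_conv snd_conv
proof (intro ballI impI)
  fix f assume f: "f \<in> E" "flipE \<eta> e f"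
  show "agree (flipS \<sigma> x) f"
  proof (cases "f = e")
    case True
    then show ?thesis using agree_flipS_edge[of x y \<sigma>] e na sp by simp
  next
    case False
    then have "\<eta> f" using f by (simp add: flipE_def)
    then have "x \<notin> f" using oth f(1) False unfolding incident_def by auto
    moreover have "agree \<sigma> f" using c f(1) \<open>\<eta> f\<close> unfolding compat_def by auto
    ultimately show ?thesis by (simp add: agree_flipS_notin)
  qed
qed

lemma step1:
  fixes E :: "'v::finite set set"
  assumes g: "simple_graph E" and e: "e \<in> incident E x" and sp: "\<forall>v. \<sigma> v = 1 \<or> \<sigma> v = -1"
  shows "weight E p (\<eta>, \<sigma>) * rate E p (\<eta>, \<sigma>) (flipE \<eta> e, flipS \<sigma> x)
    = (if agree \<sigma> e then 1/4 * (1 - p) * (weight E p (\<eta>, \<sigma>) * ind (\<forall>f\<in>incident E x. \<eta> f = (f = e)))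
       else 1/4 * p * (weight E p (\<eta>, \<sigma>) * ind (\<forall>f\<in>incident E x. \<eta> f = False)))"
proof -
  have eE: "e \<in> E" using e unfolding incident_def by auto
  obtain y where y: "e = {x, y}" "x \<noteq> y"
    using e g unfolding incident_def simple_graph_def by (auto simp: doubleton_eq_iff)
  have sp0: "\<forall>v. \<sigma> v \<noteq> 0" using sp by (metis zero_neq_neg_one zero_neq_one)
  have gi: "\<not> gamma E \<eta> e" if "\<forall>f\<in>incident E x - {e}. \<not> \<eta> f"
    using gamma_isolated[OF y that] .
  have wc: "weight E p (\<eta>, \<sigma>) * ind (compat E (\<eta>, \<sigma>)) = weight E p (\<eta>, \<sigma>)"
    using weight_compat[of E \<eta> \<sigma> p] by (cases "compat E (\<eta>, \<sigma>)") (auto simp: ind_def)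
  show ?thesis
  proof (cases "agree \<sigma> e")
    case True
    have cond: "(\<not> gamma E \<eta> e \<and> \<eta> e = agree \<sigma> e \<and> (\<forall>f\<in>incident E x - {e}. \<not> \<eta> f))
       \<longleftrightarrow> (\<forall>f\<in>incident E x. \<eta> f = (f = e))"
      using True gi e by auto
    show ?thesis
    proof (cases "\<forall>f\<in>incident E x. \<eta> f = (f = e)")
      case c: True
      then have "\<eta> e" using e by auto
      show ?thesis
      proof (cases "compat E (\<eta>, \<sigma>)")
        case cc: True
        then show ?thesis unfolding rate_B[OF e sp0] cond using c True \<open>\<eta> e\<close>
          by (simp add: ind_def algebra_simps)
      next
        case cc: False
        then show ?thesis using weight_compat[OF cc] by simp
      qed
    next
      case c: False
      have i0: "ind (\<forall>f\<in>incident E x. \<eta> f = (f = e)) = 0" using c by (simp only: ind_def if_False)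
      show ?thesis unfolding rate_B[OF e sp0] cond if_not_P[OF c] i0 using True by simp
    qed
  next
    case False
    have cond: "(\<not> gamma E \<eta> e \<and> \<eta> e = agree \<sigma> e \<and> (\<forall>f\<in>incident E x - {e}. \<not> \<eta> f))
       \<longleftrightarrow> (\<forall>f\<in>incident E x. \<eta> f = False)"
      using False gi e by auto
    show ?thesis
    proof (cases "\<forall>f\<in>incident E x. \<eta> f = False")
      case c: True
      then have ne: "\<not> \<eta> e" and oth: "\<forall>f\<in>incident E x - {e}. \<not> \<eta> f" using e by auto
      show ?thesis
      proof (cases "compat E (\<eta>, \<sigma>)")
        case cc: True
        have "compat E (flipE \<eta> e, flipS \<sigma> x)"
          by (rule compat_flip2[OF cc y eE ne oth False sp])
        then show ?thesis unfolding rate_B[OF e sp0] cond using c False ne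
          by (simp add: ind_def algebra_simps)
      next
        case cc: False
        then show ?thesis using weight_compat[OF cc] by simp
      qed
    next
      case c: False
      have i0: "ind (\<forall>f\<in>incident E x. \<eta> f = False) = 0" using c by (simp only: ind_def if_False)
      show ?thesis unfolding rate_B[OF e sp0] cond if_not_P[OF c] i0 using False by simp
    qed
  qed
qed

lemma finite_incident: "finite (incident (E :: 'v::finite set set) x)" by simp

lemma incident_E: "incident E x \<subseteq> E" unfolding incident_def by auto

lemma sum_e:
  fixes E :: "'v::finite set set"
  assumes g: "simple_graph E" and e: "e \<in> incident E x" and sp: "\<forall>v. \<sigma> v = 1 \<or> \<sigma> v = -1"
  shows "(\<Sum>\<eta>\<in>H E. weight E p (\<eta>, \<sigma>) * rate E p (\<eta>, \<sigma>) (flipE \<eta> e, flipS \<sigma> x))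
       = 1/4 * p * (1 - p) ^ card (incident E x) * (\<Prod>f\<in>E - incident E x. T p \<sigma> f)"
proof -
  define Ex where "Ex = incident E x"
  define R where "R = (\<Prod>f\<in>E - Ex. T p \<sigma> f)"
  have fin: "finite Ex" unfolding Ex_def by simp
  have eEx: "e \<in> Ex" using e Ex_def by simp
  have d1: "card Ex = Suc (card (Ex - {e}))"
    by (rule card_Suc_Diff1[OF fin eEx, symmetric])
  have cF: "(\<Prod>f\<in>B. F p \<sigma> f False) = (1 - p) ^ card B" for B :: "'v set set"
    by (simp add: F_def)
  show ?thesis
  proof (cases "agree \<sigma> e")
    case True
    have "(\<Sum>\<eta>\<in>H E. weight E p (\<eta>, \<sigma>) * rate E p (\<eta>, \<sigma>) (flipE \<eta> e, flipS \<sigma> x))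
        = 1/4 * (1 - p) * (\<Sum>\<eta>\<in>H E. weight E p (\<eta>, \<sigma>) * ind (\<forall>f\<in>Ex. \<eta> f = (f = e)))"
      unfolding step1[OF g e sp] Ex_def using True by (simp add: sum_distrib_left)
    also have "(\<Sum>\<eta>\<in>H E. weight E p (\<eta>, \<sigma>) * ind (\<forall>f\<in>Ex. \<eta> f = (f = e)))
        = (\<Prod>f\<in>Ex. F p \<sigma> f (f = e)) * R"
      unfolding R_def by (rule constrained_sum) (simp add: Ex_def incident_E)
    also have "(\<Prod>f\<in>Ex. F p \<sigma> f (f = e)) = F p \<sigma> e True * (\<Prod>f\<in>Ex - {e}. F p \<sigma> f False)"
    proof -
      have "(\<Prod>f\<in>Ex. F p \<sigma> f (f = e)) = F p \<sigma> e (e = e) * (\<Prod>f\<in>Ex - {e}. F p \<sigma> f (f = e))"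
        using fin eEx by (rule prod.remove)
      also have "(\<Prod>f\<in>Ex - {e}. F p \<sigma> f (f = e)) = (\<Prod>f\<in>Ex - {e}. F p \<sigma> f False)"
        by (intro prod.cong) auto
      finally show ?thesis by simp
    qed
    also have "\<dots> = p * (1 - p) ^ card (Ex - {e})"
      unfolding cF using True by (simp add: F_def)
    finally show ?thesis unfolding Ex_def[symmetric] R_def[symmetric] d1 by (simp add: algebra_simps)
  next
    case False
    have "(\<Sum>\<eta>\<in>H E. weight E p (\<eta>, \<sigma>) * rate E p (\<eta>, \<sigma>) (flipE \<eta> e, flipS \<sigma> x))
        = 1/4 * p * (\<Sum>\<eta>\<in>H E. weight E p (\<eta>, \<sigma>) * ind (\<forall>f\<in>Ex. \<eta> f = (\<lambda>_. False) f))"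
      unfolding step1[OF g e sp] Ex_def using False by (simp add: sum_distrib_left)
    also have "(\<Sum>\<eta>\<in>H E. weight E p (\<eta>, \<sigma>) * ind (\<forall>f\<in>Ex. \<eta> f = (\<lambda>_. False) f))
        = (\<Prod>f\<in>Ex. F p \<sigma> f ((\<lambda>_. False) f)) * R"
      unfolding R_def by (rule constrained_sum) (simp add: Ex_def incident_E)
    also have "(\<Prod>f\<in>Ex. F p \<sigma> f ((\<lambda>_. False) f)) = (1 - p) ^ card Ex"
      using cF by simp
    finally show ?thesis unfolding Ex_def[symmetric] R_def[symmetric] by (simp add: algebra_simps)
  qed
qed

lemma sumN:
  fixes E :: "'v::finite set set"
  assumes g: "simple_graph E" and sp: "\<forall>v. \<sigma> v = 1 \<or> \<sigma> v = -1"
  shows "(\<Sum>\<eta>\<in>H E. \<Sum>e\<in>incident E x. weight E p (\<eta>, \<sigma>) * rate E p (\<eta>, \<sigma>) (flipE \<eta> e, flipS \<sigma> x))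
       = real (card (incident E x)) * (1/4 * p * (1 - p) ^ card (incident E x) * (\<Prod>f\<in>E - incident E x. T p \<sigma> f))"
  by (subst sum.swap) (simp add: sum_e[OF g _ sp])

lemma sumD:
  fixes E :: "'v::finite set set"
  shows "(\<Sum>\<eta>\<in>H E. weight E p (\<eta>, \<sigma>))
       = (1 - p) ^ (card (incident E x) - card {e \<in> incident E x. agree \<sigma> e}) * (\<Prod>f\<in>E - incident E x. T p \<sigma> f)"
proof -
  define Ex where "Ex = incident E x"
  have fin: "finite Ex" unfolding Ex_def by simp
  have "(\<Sum>\<eta>\<in>H E. weight E p (\<eta>, \<sigma>)) = (\<Sum>\<eta>\<in>H E. weight E p (\<eta>, \<sigma>) * ind (\<forall>f\<in>{}. \<eta> f = (\<lambda>_. False) f))"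
    by (simp add: ind_def)
  also have "\<dots> = (\<Prod>f\<in>{}. F p \<sigma> f ((\<lambda>_. False) f)) * (\<Prod>f\<in>E - {}. T p \<sigma> f)"
    by (rule constrained_sum) simp
  also have "\<dots> = (\<Prod>f\<in>E. T p \<sigma> f)" by simp
  also have "\<dots> = (\<Prod>f\<in>E - Ex. T p \<sigma> f) * (\<Prod>f\<in>Ex. T p \<sigma> f)"
    by (rule prod.subset_diff) (simp_all add: Ex_def incident_E)
  also have "(\<Prod>f\<in>Ex. T p \<sigma> f) = (\<Prod>f\<in>Ex. if agree \<sigma> f then 1 else 1 - p)"
    by (intro prod.cong) (auto simp: T_def F_def)
  also have "\<dots> = (\<Prod>f\<in>Ex \<inter> {f. agree \<sigma> f}. 1) * (\<Prod>f\<in>Ex \<inter> - {f. agree \<sigma> f}. 1 - p)"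
    using fin by (rule prod.If_cases)
  also have "\<dots> = (1 - p) ^ card (Ex \<inter> - {f. agree \<sigma> f})"
    by simp
  also have "Ex \<inter> - {f. agree \<sigma> f} = Ex - {e \<in> Ex. agree \<sigma> e}" by auto
  also have "card (Ex - {e \<in> Ex. agree \<sigma> e}) = card Ex - card {e \<in> Ex. agree \<sigma> e}"
    using fin by (intro card_Diff_subset) auto
  finally show ?thesis unfolding Ex_def by (simp add: mult.commute)
qed

lemma ev_sets:
  assumes "X \<in> measurable M (count_space UNIV)"
  shows "{\<omega> \<in> space M. P (X \<omega>)} \<in> sets M"
proof -
  have "{\<omega> \<in> space M. P (X \<omega>)} = X -` {z. P z} \<inter> space M" by auto
  moreover have "X -` {z. P z} \<inter> space M \<in> sets M"
    by (rule measurable_sets[OF assms]) simp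
  ultimately show ?thesis by simp
qed

lemma weight_nonneg:
  assumes "0 \<le> p" "p \<le> 1"
  shows "0 \<le> weight E p c"
  unfolding weight_def using assms by (intro prod_nonneg) auto

lemma Zpos:
  fixes E :: "'v::finite set set"
  assumes p0: "0 \<le> p" and p1: "p \<le> 1"
  shows "0 < (\<Sum>d\<in>states E. weight E p d)"
proof -
  define d0 :: "'v config" where "d0 = (if p < 1 then (\<lambda>_. False, \<lambda>_. 1) else (\<lambda>f. f \<in> E, \<lambda>_. 1))"
  have d0S: "d0 \<in> states E" unfolding d0_def states_def by auto
  have w0: "0 < weight E p d0"
  proof (cases "p < 1")
    case True
    then have "weight E p d0 = (\<Prod>e\<in>E. 1 - p)" unfolding d0_def weight_def by simp
    then show ?thesis using True by simp
  next
    case False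
    then have "p = 1" using p1 by simp
    have "agree (\<lambda>_::'v. 1::int) e" for e unfolding agree_def by simp
    then have "weight E p d0 = (\<Prod>e\<in>E. 1)" unfolding d0_def weight_def using False \<open>p = 1\<close>
      by (intro prod.cong) auto
    then show ?thesis by simp
  qed
  have "weight E p d0 \<le> (\<Sum>d\<in>states E. weight E p d)"
    by (rule member_le_sum[OF d0S]) (use weight_nonneg[OF p0 p1] finite_states in auto)
  with w0 show ?thesis by simp
qed

lemma IP_sum1:
  fixes E :: "'v::finite set set"
  assumes p0: "0 \<le> p" and p1: "p \<le> 1"
  shows "(\<Sum>a\<in>states E. IP E p a) = 1"
proof -
  have "(\<Sum>a\<in>states E. IP E p a) = (\<Sum>a\<in>states E. weight E p a / (\<Sum>d\<in>states E. weight E p d))"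
    unfolding IP_def by (intro sum.cong) auto
  also have "\<dots> = 1" using Zpos[OF p0 p1, of E] by (simp add: sum_divide_distrib[symmetric])
  finally show ?thesis .
qed

lemma R_reindex:
  fixes E :: "'v::finite set set"
  assumes sp: "\<forall>v. \<sigma> v = 1 \<or> \<sigma> v = -1"
  shows "(\<Sum>\<eta>2\<in>UNIV. rate E p (\<eta>, \<sigma>) (\<eta>2, flipS \<sigma> x))
       = (\<Sum>e\<in>incident E x. rate E p (\<eta>, \<sigma>) (flipE \<eta> e, flipS \<sigma> x))"
proof -
  have sp0: "\<forall>v. \<sigma> v \<noteq> 0" using sp by (metis zero_neq_neg_one zero_neq_one)
  have inj: "inj_on (flipE \<eta>) (incident E x)"
    by (rule inj_onI) (rule flipE_inj)
  have "(\<Sum>e\<in>incident E x. rate E p (\<eta>, \<sigma>) (flipE \<eta> e, flipS \<sigma> x))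
      = (\<Sum>\<eta>2\<in>flipE \<eta> ` incident E x. rate E p (\<eta>, \<sigma>) (\<eta>2, flipS \<sigma> x))"
    by (rule sum.reindex[OF inj, unfolded comp_def, symmetric])
  also have "\<dots> = (\<Sum>\<eta>2\<in>UNIV. rate E p (\<eta>, \<sigma>) (\<eta>2, flipS \<sigma> x))"
  proof (rule sum.mono_neutral_left)
    show "finite (UNIV :: ('v set \<Rightarrow> bool) set)" by simp
    show "flipE \<eta> ` incident E x \<subseteq> UNIV" by simp
    show "\<forall>\<eta>2\<in>UNIV - flipE \<eta> ` incident E x. rate E p (\<eta>, \<sigma>) (\<eta>2, flipS \<sigma> x) = 0"
    proof
      fix \<eta>2 assume h: "\<eta>2 \<in> UNIV - flipE \<eta> ` incident E x"
      show "rate E p (\<eta>, \<sigma>) (\<eta>2, flipS \<sigma> x) = 0"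
      proof (rule ccontr)
        assume "rate E p (\<eta>, \<sigma>) (\<eta>2, flipS \<sigma> x) \<noteq> 0"
        from rate_zero[OF this] have
          "(flipS \<sigma> x = \<sigma> \<and> (\<exists>e\<in>E. \<eta>2 = flipE \<eta> e))
           \<or> (\<exists>x'. \<exists>e\<in>incident E x'. flipS \<sigma> x = flipS \<sigma> x' \<and> \<eta>2 = flipE \<eta> e)"
          by simp
        moreover have "flipS \<sigma> x \<noteq> \<sigma>" using flipS_neq[of \<sigma> x] sp0 by simp
        ultimately obtain x' e where xe: "e \<in> incident E x'" "flipS \<sigma> x = flipS \<sigma> x'" "\<eta>2 = flipE \<eta> e"
          by blast
        have "x' = x" using flipS_inj[of \<sigma> x x'] sp0 xe(2) by simp
        then have "\<eta>2 \<in> flipE \<eta> ` incident E x" using xe by simp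
        with h show False by simp
      qed
    qed
  qed
  finally show ?thesis by simp
qed

lemma sumUNIV_if: "(\<Sum>x\<in>(UNIV::'a::finite set). if x \<in> B then f x else (0::real)) = sum f B"
  using sum.inter_restrict[of "UNIV::'a set" f B] by simp

lemma ratio:
  fixes E :: "'v::finite set set"
  assumes g: "simple_graph E" and p0: "0 \<le> p" and p1: "p \<le> 1"
    and sp: "\<forall>v. \<sigma> v = 1 \<or> \<sigma> v = -1"
    and Dpos: "0 < (\<Sum>\<eta>\<in>UNIV. IP E p (\<eta>, \<sigma>))"
  shows "(\<Sum>\<eta>1\<in>UNIV. \<Sum>\<eta>2\<in>UNIV. IP E p (\<eta>1, \<sigma>) * Qpow E p 1 (\<eta>1, \<sigma>) (\<eta>2, flipS \<sigma> x))
          / (\<Sum>\<eta>\<in>UNIV. IP E p (\<eta>, \<sigma>))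
       = 1/4 * real (card (incident E x)) * p * (1 - p) ^ card {e \<in> incident E x. agree \<sigma> e}"
proof -
  define Z where "Z = (\<Sum>d\<in>states E. weight E p d)"
  have Z0: "0 < Z" unfolding Z_def by (rule Zpos[OF p0 p1])
  have sp0: "\<forall>v. \<sigma> v \<noteq> 0" using sp by (metis zero_neq_neg_one zero_neq_one)
  have SH: "(\<eta>, \<sigma>) \<in> states E \<longleftrightarrow> \<eta> \<in> H E" for \<eta>
    unfolding states_iff H_def using sp by simp
  have IPH: "IP E p (\<eta>, \<sigma>) = (if \<eta> \<in> H E then weight E p (\<eta>, \<sigma>) / Z else 0)" for \<eta>
    unfolding IP_def Z_def SH ..
  have ne: "flipS \<sigma> x \<noteq> \<sigma>" using flipS_neq[of \<sigma> x] sp0 by simp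
  have Q1: "Qpow E p 1 (\<eta>, \<sigma>) (\<eta>2, flipS \<sigma> x) = rate E p (\<eta>, \<sigma>) (\<eta>2, flipS \<sigma> x)"
    if "\<eta> \<in> H E" for \<eta> \<eta>2
  proof -
    have cS: "(\<eta>, \<sigma>) \<in> states E" using that SH by simp
    have "Qpow E p 1 (\<eta>, \<sigma>) (\<eta>2, flipS \<sigma> x)
        = (\<Sum>d\<in>states E. (if (\<eta>, \<sigma>) = d then 1 else 0) * Qgen E p d (\<eta>2, flipS \<sigma> x))"
      by (simp add: One_nat_def)
    also have "\<dots> = (\<Sum>d\<in>states E. if (\<eta>, \<sigma>) = d then Qgen E p d (\<eta>2, flipS \<sigma> x) else 0)"
      by (intro sum.cong) auto
    also have "\<dots> = Qgen E p (\<eta>, \<sigma>) (\<eta>2, flipS \<sigma> x)"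
      using cS finite_states[of E] by (simp add: sum.delta)
    also have "\<dots> = rate E p (\<eta>, \<sigma>) (\<eta>2, flipS \<sigma> x)"
      using ne unfolding Qgen_def by simp
    finally show ?thesis .
  qed
  define N where "N = (\<Sum>\<eta>\<in>H E. \<Sum>e\<in>incident E x. weight E p (\<eta>, \<sigma>) * rate E p (\<eta>, \<sigma>) (flipE \<eta> e, flipS \<sigma> x))"
  define D where "D = (\<Sum>\<eta>\<in>H E. weight E p (\<eta>, \<sigma>))"
  have num: "(\<Sum>\<eta>1\<in>UNIV. \<Sum>\<eta>2\<in>UNIV. IP E p (\<eta>1, \<sigma>) * Qpow E p 1 (\<eta>1, \<sigma>) (\<eta>2, flipS \<sigma> x)) = N / Z"
  proof -
    have "(\<Sum>\<eta>1\<in>UNIV. \<Sum>\<eta>2\<in>UNIV. IP E p (\<eta>1, \<sigma>) * Qpow E p 1 (\<eta>1, \<sigma>) (\<eta>2, flipS \<sigma> x))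
        = (\<Sum>\<eta>1\<in>UNIV. if \<eta>1 \<in> H E then (\<Sum>e\<in>incident E x. weight E p (\<eta>1, \<sigma>) * rate E p (\<eta>1, \<sigma>) (flipE \<eta>1 e, flipS \<sigma> x)) / Z else 0)"
    proof (intro sum.cong refl)
      fix \<eta>1 :: "'v set \<Rightarrow> bool"
      show "(\<Sum>\<eta>2\<in>UNIV. IP E p (\<eta>1, \<sigma>) * Qpow E p 1 (\<eta>1, \<sigma>) (\<eta>2, flipS \<sigma> x))
          = (if \<eta>1 \<in> H E then (\<Sum>e\<in>incident E x. weight E p (\<eta>1, \<sigma>) * rate E p (\<eta>1, \<sigma>) (flipE \<eta>1 e, flipS \<sigma> x)) / Z else 0)"
      proof (cases "\<eta>1 \<in> H E")
        case True
        have "(\<Sum>\<eta>2\<in>UNIV. IP E p (\<eta>1, \<sigma>) * Qpow E p 1 (\<eta>1, \<sigma>) (\<eta>2, flipS \<sigma> x))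
            = weight E p (\<eta>1, \<sigma>) / Z * (\<Sum>\<eta>2\<in>UNIV. rate E p (\<eta>1, \<sigma>) (\<eta>2, flipS \<sigma> x))"
          unfolding IPH Q1[OF True] using True by (simp add: sum_distrib_left)
        also have "\<dots> = weight E p (\<eta>1, \<sigma>) / Z * (\<Sum>e\<in>incident E x. rate E p (\<eta>1, \<sigma>) (flipE \<eta>1 e, flipS \<sigma> x))"
          unfolding R_reindex[OF sp] ..
        finally show ?thesis using True by (simp add: sum_distrib_left sum_divide_distrib)
      next
        case False
        then show ?thesis unfolding IPH by simp
      qed
    qed
    also have "\<dots> = (\<Sum>\<eta>1\<in>H E. (\<Sum>e\<in>incident E x. weight E p (\<eta>1, \<sigma>) * rate E p (\<eta>1, \<sigma>) (flipE \<eta>1 e, flipS \<sigma> x)) / Z)"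
      by (rule sumUNIV_if) 
    also have "\<dots> = N / Z" unfolding N_def by (simp add: sum_divide_distrib)
    finally show ?thesis .
  qed
  have den: "(\<Sum>\<eta>\<in>UNIV. IP E p (\<eta>, \<sigma>)) = D / Z"
  proof -
    have "(\<Sum>\<eta>\<in>UNIV. IP E p (\<eta>, \<sigma>)) = (\<Sum>\<eta>\<in>UNIV. if \<eta> \<in> H E then weight E p (\<eta>, \<sigma>) / Z else 0)"
      unfolding IPH ..
    also have "\<dots> = (\<Sum>\<eta>\<in>H E. weight E p (\<eta>, \<sigma>) / Z)"
      by (rule sumUNIV_if)
    also have "\<dots> = D / Z" unfolding D_def by (simp add: sum_divide_distrib)
    finally show ?thesis .
  qed
  define d where "d = card (incident E x)"
  define k where "k = card {e \<in> incident E x. agree \<sigma> e}"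
  define R where "R = (\<Prod>f\<in>E - incident E x. T p \<sigma> f)"
  have ND: "N = real d * (1/4 * p * (1 - p) ^ d * R)" unfolding N_def d_def R_def by (rule sumN[OF g sp])
  have DD: "D = (1 - p) ^ (d - k) * R" unfolding D_def d_def k_def R_def by (rule sumD)
  have kd: "k \<le> d" unfolding k_def d_def by (intro card_mono) auto
  have pw: "(1 - p) ^ d = (1 - p) ^ k * (1 - p) ^ (d - k)"
    using kd by (simp add: power_add[symmetric])
  have D0: "D \<noteq> 0" using Dpos den Z0 by auto
  have "N / Z / (D / Z) = N / D" using Z0 by simp
  also have "\<dots> = real d * (1/4 * p * (1 - p) ^ k) * D / D"
    unfolding ND pw DD by (simp add: algebra_simps)
  also have "\<dots> = 1/4 * real d * p * (1 - p) ^ k" using D0 by simp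
  finally show ?thesis unfolding num den d_def k_def .
qed

lemma all_le_1: "(\<forall>i\<le>(1::nat). Q i) \<longleftrightarrow> Q 0 \<and> Q 1"
proof
  assume "\<forall>i\<le>1. Q i" then show "Q 0 \<and> Q 1" by simp
next
  assume h: "Q 0 \<and> Q 1"
  show "\<forall>i\<le>1. Q i"
  proof (intro allI impI)
    fix i :: nat assume "i \<le> 1"
    then have "i = 0 \<or> i = 1" by arith
    then show "Q i" using h by auto
  qed
qed

lemma all_le_2: "(\<forall>i\<le>(2::nat). Q i) \<longleftrightarrow> Q 0 \<and> Q 1 \<and> Q 2"
proof
  assume "\<forall>i\<le>2. Q i" then show "Q 0 \<and> Q 1 \<and> Q 2" by simp
next
  assume h: "Q 0 \<and> Q 1 \<and> Q 2"
  show "\<forall>i\<le>2. Q i"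
  proof (intro allI impI)
    fix i :: nat assume "i \<le> 2"
    then have "i = 0 \<or> i = 1 \<or> i = 2" by arith
    then show "Q i" using h by auto
  qed
qed

lemma fdd0:
  assumes fdd: "\<forall>(n::nat) (t::nat \<Rightarrow> real) (a::nat \<Rightarrow> 'v config).
               t 0 = 0 \<and> (\<forall>i<n. t i \<le> t (Suc i)) \<longrightarrow>
               measure M {\<omega> \<in> space M. \<forall>i\<le>n. X (t i) \<omega> = a i}
                 = IP E p (a 0) * (\<Prod>i<n. Pt E p (t (Suc i) - t i) (a i) (a (Suc i)))"
  shows "measure M {\<omega> \<in> space M. X 0 \<omega> = a0} = IP E p a0"
proof -
  have h: "measure M {\<omega> \<in> space M. \<forall>i\<le>(0::nat). X ((\<lambda>_::nat. 0::real) i) \<omega> = (\<lambda>_::nat. a0) i}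
                 = IP E p ((\<lambda>_::nat. a0) 0) * (\<Prod>i<(0::nat). Pt E p ((\<lambda>_::nat. 0::real) (Suc i) - (\<lambda>_::nat. 0::real) i) ((\<lambda>_::nat. a0) i) ((\<lambda>_::nat. a0) (Suc i)))"
    by (rule mp[OF fdd[THEN spec[where x=0], THEN spec[where x="\<lambda>_. 0"], THEN spec[where x="\<lambda>_. a0"]]]) simp
  have eq: "{\<omega> \<in> space M. \<forall>i\<le>(0::nat). X ((\<lambda>_. 0::real) i) \<omega> = (\<lambda>_. a0) i} = {\<omega> \<in> space M. X 0 \<omega> = a0}"
    by auto
  show ?thesis using h unfolding eq by simp
qed

lemma fdd1:
  assumes fdd: "\<forall>(n::nat) (t::nat \<Rightarrow> real) (a::nat \<Rightarrow> 'v config).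
               t 0 = 0 \<and> (\<forall>i<n. t i \<le> t (Suc i)) \<longrightarrow>
               measure M {\<omega> \<in> space M. \<forall>i\<le>n. X (t i) \<omega> = a i}
                 = IP E p (a 0) * (\<Prod>i<n. Pt E p (t (Suc i) - t i) (a i) (a (Suc i)))"
    and u: "0 \<le> u"
  shows "measure M {\<omega> \<in> space M. X 0 \<omega> = a0 \<and> X u \<omega> = a1} = IP E p a0 * Pt E p u a0 a1"
proof -
  define tt :: "nat \<Rightarrow> real" where "tt = (\<lambda>i. if i = 0 then 0 else u)"
  define aa where "aa = (\<lambda>i::nat. if i = 0 then a0 else a1)"
  have pre: "tt 0 = 0 \<and> (\<forall>i<1. tt i \<le> tt (Suc i))" using u unfolding tt_def by simp
  have h: "measure M {\<omega> \<in> space M. \<forall>i\<le>1. X (tt i) \<omega> = aa i}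
                 = IP E p (aa 0) * (\<Prod>i<1. Pt E p (tt (Suc i) - tt i) (aa i) (aa (Suc i)))"
    by (rule mp[OF fdd[THEN spec[where x=1], THEN spec[where x=tt], THEN spec[where x=aa]] pre])
  have "{\<omega> \<in> space M. \<forall>i\<le>1. X (tt i) \<omega> = aa i} = {\<omega> \<in> space M. X 0 \<omega> = a0 \<and> X u \<omega> = a1}"
    unfolding all_le_1 tt_def aa_def by simp
  with h show ?thesis unfolding tt_def aa_def by simp
qed

lemma fdd2:
  assumes fdd: "\<forall>(n::nat) (t::nat \<Rightarrow> real) (a::nat \<Rightarrow> 'v config).
               t 0 = 0 \<and> (\<forall>i<n. t i \<le> t (Suc i)) \<longrightarrow>
               measure M {\<omega> \<in> space M. \<forall>i\<le>n. X (t i) \<omega> = a i}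
                 = IP E p (a 0) * (\<Prod>i<n. Pt E p (t (Suc i) - t i) (a i) (a (Suc i)))"
    and u: "0 \<le> u" and v: "0 \<le> v"
  shows "measure M {\<omega> \<in> space M. X 0 \<omega> = a0 \<and> X u \<omega> = a1 \<and> X (u + v) \<omega> = a2}
       = IP E p a0 * (Pt E p u a0 a1 * Pt E p v a1 a2)"
proof -
  define tt :: "nat \<Rightarrow> real" where "tt = (\<lambda>i. if i = 0 then 0 else if i = 1 then u else u + v)"
  define aa where "aa = (\<lambda>i::nat. if i = 0 then a0 else if i = 1 then a1 else a2)"
  have pre: "tt 0 = 0 \<and> (\<forall>i<2. tt i \<le> tt (Suc i))"
  proof -
    have "tt i \<le> tt (Suc i)" if "i < 2" for i
    proof -
      from that have "i = 0 \<or> i = 1" by arith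
      then show ?thesis using u v unfolding tt_def by auto
    qed
    then show ?thesis unfolding tt_def by simp
  qed
  have h: "measure M {\<omega> \<in> space M. \<forall>i\<le>2. X (tt i) \<omega> = aa i}
                 = IP E p (aa 0) * (\<Prod>i<2. Pt E p (tt (Suc i) - tt i) (aa i) (aa (Suc i)))"
    by (rule mp[OF fdd[THEN spec[where x=2], THEN spec[where x=tt], THEN spec[where x=aa]] pre])
  have "{\<omega> \<in> space M. \<forall>i\<le>2. X (tt i) \<omega> = aa i} = {\<omega> \<in> space M. X 0 \<omega> = a0 \<and> X u \<omega> = a1 \<and> X (u + v) \<omega> = a2}"
    unfolding all_le_2 tt_def aa_def by simp
  moreover have "(\<Prod>i<2. Pt E p (tt (Suc i) - tt i) (aa i) (aa (Suc i))) = Pt E p u a0 a1 * Pt E p v a1 a2"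
    by (simp add: tt_def aa_def numeral_2_eq_2)
  ultimately show ?thesis using h unfolding aa_def by simp
qed

theorem proposition9:
  fixes E :: "'v::finite set set" and p :: real and M :: "'m measure"
    and X :: "real \<Rightarrow> 'm \<Rightarrow> 'v config"
    and x :: 'v and \<sigma> :: "'v \<Rightarrow> int" and s :: real
  assumes graph: "simple_graph E"
    and p0: "0 \<le> p" and p1: "p \<le> 1"
    and M: "prob_space M"
    and meas: "\<forall>t\<ge>0. X t \<in> measurable M (count_space UNIV)"
    and fdd: "\<forall>(n::nat) (t::nat \<Rightarrow> real) (a::nat \<Rightarrow> 'v config).
               t 0 = 0 \<and> (\<forall>i<n. t i \<le> t (Suc i)) \<longrightarrow>
               measure M {\<omega> \<in> space M. \<forall>i\<le>n. X (t i) \<omega> = a i}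
                 = IP E p (a 0) * (\<Prod>i<n. Pt E p (t (Suc i) - t i) (a i) (a (Suc i)))"
    and spins: "\<forall>v. \<sigma> v = 1 \<or> \<sigma> v = -1"
    and s: "s \<ge> 0"
    and pos: "measure M {\<omega> \<in> space M. snd (X s \<omega>) = \<sigma>} > 0"
  shows "((\<lambda>t. measure M {\<omega> \<in> space M. snd (X (t + s) \<omega>) = flipS \<sigma> x \<and> snd (X s \<omega>) = \<sigma>}
                / measure M {\<omega> \<in> space M. snd (X s \<omega>) = \<sigma>} / t)
          \<longlongrightarrow> 1/4 * real (card (incident E x)) * p * (1 - p) ^ card {e \<in> incident E x. agree \<sigma> e})
         (at_right 0)"
proof -
  interpret P: prob_space M by (rule M)
  define S where "S = states E"
  have finS: "finite S" unfolding S_def by (rule finite_states)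
  define Ev where "Ev u a = {\<omega> \<in> space M. X u \<omega> = a}" for u a
  have evs: "{\<omega> \<in> space M. Q (X u \<omega>)} \<in> sets M" if "0 \<le> u" for u and Q :: "'v config \<Rightarrow> bool"
  proof -
    have "X u \<in> measurable M (count_space UNIV)" using meas that by simp
    then show ?thesis by (rule ev_sets)
  qed
  have Evs: "Ev u a \<in> sets M" if "0 \<le> u" for u a unfolding Ev_def by (rule evs[OF that])
  define B where "B = {\<omega> \<in> space M. X 0 \<omega> \<in> S}"
  have Bs: "B \<in> sets M" unfolding B_def by (rule evs) simp
  have B1: "measure M B = 1"
  proof -
    have "B = (\<Union>a\<in>S. Ev 0 a)" unfolding B_def Ev_def by auto
    then have "measure M B = (\<Sum>a\<in>S. measure M (Ev 0 a))"
      using finS Evs[of 0] by (simp add: P.finite_measure_finite_Union disjoint_family_on_def Ev_def, 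
          subst P.finite_measure_finite_Union, auto simp: disjoint_family_on_def)
    also have "\<dots> = (\<Sum>a\<in>S. IP E p a)" unfolding Ev_def using fdd0[OF fdd] by simp
    also have "\<dots> = 1" unfolding S_def by (rule IP_sum1[OF p0 p1])
    finally show ?thesis .
  qed
  have Bc0: "measure M (space M - B) = 0" using P.prob_compl[OF Bs] B1 by simp
  have K2: "measure M A = (\<Sum>a\<in>S. measure M (A \<inter> Ev 0 a))" if A: "A \<in> sets M" for A
  proof -
    have "measure M A = measure M (A \<inter> B) + measure M (A \<inter> (space M - B))"
    proof -
      have "A = (A \<inter> B) \<union> (A \<inter> (space M - B))" using sets.sets_into_space[OF A] by auto
      then have "measure M A = measure M ((A \<inter> B) \<union> (A \<inter> (space M - B)))" by simp
      also have "\<dots> = measure M (A \<inter> B) + measure M (A \<inter> (space M - B))"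
        by (rule P.finite_measure_Union) (use A Bs in auto)
      finally show ?thesis .
    qed
    moreover have "measure M (A \<inter> (space M - B)) = 0"
    proof -
      have "measure M (A \<inter> (space M - B)) \<le> measure M (space M - B)"
        by (rule P.finite_measure_mono) (use Bs in auto)
      then show ?thesis using Bc0 by (simp add: measure_nonneg antisym)
    qed
    moreover have "A \<inter> B = (\<Union>a\<in>S. A \<inter> Ev 0 a)" unfolding B_def Ev_def using sets.sets_into_space[OF A] by auto
    moreover have "measure M (\<Union>a\<in>S. A \<inter> Ev 0 a) = (\<Sum>a\<in>S. measure M (A \<inter> Ev 0 a))"
      by (rule P.finite_measure_finite_Union) (use finS A Evs[of 0] in \<open>auto simp: disjoint_family_on_def Ev_def\<close>)
    ultimately show ?thesis by simp
  qed
  have K3: "measure M (Ev u c1) = IP E p c1" if u: "0 \<le> u" for u c1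
  proof -
    have "measure M (Ev u c1) = (\<Sum>a\<in>S. measure M (Ev u c1 \<inter> Ev 0 a))" by (rule K2[OF Evs[OF u]])
    also have "\<dots> = (\<Sum>a\<in>S. IP E p a * Pt E p u a c1)"
    proof (intro sum.cong refl)
      fix a
      have "Ev u c1 \<inter> Ev 0 a = {\<omega> \<in> space M. X 0 \<omega> = a \<and> X u \<omega> = c1}" unfolding Ev_def by auto
      then show "measure M (Ev u c1 \<inter> Ev 0 a) = IP E p a * Pt E p u a c1" using fdd1[OF fdd u] by simp
    qed
    also have "\<dots> = IP E p c1" unfolding S_def by (rule Pt_stat[OF graph p0 p1])
    finally show ?thesis .
  qed
  have K4: "measure M (Ev u c1 \<inter> Ev (u + v) c2) = IP E p c1 * Pt E p v c1 c2" if u: "0 \<le> u" and v: "0 \<le> v" for u v c1 c2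
  proof -
    have uv: "0 \<le> u + v" using u v by simp
    have "measure M (Ev u c1 \<inter> Ev (u + v) c2) = (\<Sum>a\<in>S. measure M (Ev u c1 \<inter> Ev (u + v) c2 \<inter> Ev 0 a))"
      by (rule K2) (use Evs[OF u] Evs[OF uv] in auto)
    also have "\<dots> = (\<Sum>a\<in>S. IP E p a * Pt E p u a c1 * Pt E p v c1 c2)"
    proof (intro sum.cong refl)
      fix a
      have "Ev u c1 \<inter> Ev (u + v) c2 \<inter> Ev 0 a = {\<omega> \<in> space M. X 0 \<omega> = a \<and> X u \<omega> = c1 \<and> X (u + v) \<omega> = c2}"
        unfolding Ev_def by auto
      then show "measure M (Ev u c1 \<inter> Ev (u + v) c2 \<inter> Ev 0 a) = IP E p a * Pt E p u a c1 * Pt E p v c1 c2"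
        using fdd2[OF fdd u v] by (simp add: mult.assoc)
    qed
    also have "\<dots> = (\<Sum>a\<in>S. IP E p a * Pt E p u a c1) * Pt E p v c1 c2"
      by (simp add: sum_distrib_right)
    also have "\<dots> = IP E p c1 * Pt E p v c1 c2" unfolding S_def Pt_stat[OF graph p0 p1] ..
    finally show ?thesis .
  qed
  define D where "D = (\<Sum>\<eta>\<in>UNIV. IP E p (\<eta>, \<sigma>))"
  have K5: "measure M {\<omega> \<in> space M. snd (X s \<omega>) = \<sigma>} = D"
  proof -
    have "{\<omega> \<in> space M. snd (X s \<omega>) = \<sigma>} = (\<Union>\<eta>\<in>UNIV. Ev s (\<eta>, \<sigma>))" unfolding Ev_def
      by (auto simp: prod_eq_iff)
    moreover have "measure M (\<Union>\<eta>\<in>UNIV. Ev s (\<eta>, \<sigma>)) = (\<Sum>\<eta>\<in>UNIV. measure M (Ev s (\<eta>, \<sigma>)))"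
      by (rule P.finite_measure_finite_Union) (use Evs[OF s] in \<open>auto simp: disjoint_family_on_def Ev_def\<close>)
    ultimately show ?thesis unfolding D_def using K3[OF s] by simp
  qed
  have Dpos: "0 < D" using pos K5 by simp
  define \<sigma>' where "\<sigma>' = flipS \<sigma> x"
  have K6: "measure M {\<omega> \<in> space M. snd (X (t + s) \<omega>) = \<sigma>' \<and> snd (X s \<omega>) = \<sigma>}
      = (\<Sum>\<eta>1\<in>UNIV. \<Sum>\<eta>2\<in>UNIV. IP E p (\<eta>1, \<sigma>) * Pt E p t (\<eta>1, \<sigma>) (\<eta>2, \<sigma>'))" if t: "0 \<le> t" for t
  proof -
    have st: "0 \<le> s + t" using s t by simp
    have "{\<omega> \<in> space M. snd (X (t + s) \<omega>) = \<sigma>' \<and> snd (X s \<omega>) = \<sigma>}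
        = (\<Union>q\<in>UNIV. Ev s (fst q, \<sigma>) \<inter> Ev (s + t) (snd q, \<sigma>'))" unfolding Ev_def
      by (auto simp: prod_eq_iff add.commute)
    moreover have "measure M (\<Union>q\<in>UNIV. Ev s (fst q, \<sigma>) \<inter> Ev (s + t) (snd q, \<sigma>'))
        = (\<Sum>q\<in>UNIV. measure M (Ev s (fst q, \<sigma>) \<inter> Ev (s + t) (snd q, \<sigma>')))"
      by (rule P.finite_measure_finite_Union) (use Evs[OF s] Evs[OF st] in \<open>auto simp: disjoint_family_on_def Ev_def\<close>)
    moreover have "(\<Sum>q\<in>UNIV. measure M (Ev s (fst q, \<sigma>) \<inter> Ev (s + t) (snd q, \<sigma>')))
        = (\<Sum>q\<in>UNIV. IP E p (fst q, \<sigma>) * Pt E p t (fst q, \<sigma>) (snd q, \<sigma>'))"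
      using K4[OF s t] by simp
    moreover have "(\<Sum>q\<in>(UNIV :: (('v set \<Rightarrow> bool) \<times> ('v set \<Rightarrow> bool)) set). IP E p (fst q, \<sigma>) * Pt E p t (fst q, \<sigma>) (snd q, \<sigma>'))
        = (\<Sum>\<eta>1\<in>UNIV. \<Sum>\<eta>2\<in>UNIV. IP E p (\<eta>1, \<sigma>) * Pt E p t (\<eta>1, \<sigma>) (\<eta>2, \<sigma>'))"
      unfolding UNIV_Times_UNIV[symmetric] sum.cartesian_product by (intro sum.cong) (auto simp: split_beta)
    ultimately show ?thesis by simp
  qed
  have sp0: "\<forall>v. \<sigma> v \<noteq> 0" using spins by (metis zero_neq_neg_one zero_neq_one)
  have ne: "(\<eta>1, \<sigma>) \<noteq> (\<eta>2, \<sigma>')" for \<eta>1 \<eta>2 using flipS_neq[of \<sigma> x] sp0 unfolding \<sigma>'_def by simp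
  have lim: "((\<lambda>t. (\<Sum>\<eta>1\<in>UNIV. \<Sum>\<eta>2\<in>UNIV. IP E p (\<eta>1, \<sigma>) * (Pt E p t (\<eta>1, \<sigma>) (\<eta>2, \<sigma>') / t)) / D)
      \<longlongrightarrow> (\<Sum>\<eta>1\<in>UNIV. \<Sum>\<eta>2\<in>UNIV. IP E p (\<eta>1, \<sigma>) * Qpow E p 1 (\<eta>1, \<sigma>) (\<eta>2, \<sigma>')) / D) (at_right 0)"
    by (intro tendsto_divide tendsto_const tendsto_sum tendsto_mult Pt_deriv[OF p0 p1 ne]) (use Dpos in simp)
  have ev: "\<forall>\<^sub>F t in at_right 0. (\<Sum>\<eta>1\<in>UNIV. \<Sum>\<eta>2\<in>UNIV. IP E p (\<eta>1, \<sigma>) * (Pt E p t (\<eta>1, \<sigma>) (\<eta>2, \<sigma>') / t)) / D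
      = measure M {\<omega> \<in> space M. snd (X (t + s) \<omega>) = flipS \<sigma> x \<and> snd (X s \<omega>) = \<sigma>}
                / measure M {\<omega> \<in> space M. snd (X s \<omega>) = \<sigma>} / t"
    using eventually_at_right_less[of "0::real"]
  proof (rule eventually_mono)
    fix t :: real assume t: "0 < t"
    show "(\<Sum>\<eta>1\<in>UNIV. \<Sum>\<eta>2\<in>UNIV. IP E p (\<eta>1, \<sigma>) * (Pt E p t (\<eta>1, \<sigma>) (\<eta>2, \<sigma>') / t)) / D
      = measure M {\<omega> \<in> space M. snd (X (t + s) \<omega>) = flipS \<sigma> x \<and> snd (X s \<omega>) = \<sigma>}
                / measure M {\<omega> \<in> space M. snd (X s \<omega>) = \<sigma>} / t"
      unfolding \<sigma>'_def[symmetric] K6[OF less_imp_le[OF t]] K5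
      by (simp add: sum_divide_distrib mult.commute)
  qed
  have L: "((\<lambda>t. measure M {\<omega> \<in> space M. snd (X (t + s) \<omega>) = flipS \<sigma> x \<and> snd (X s \<omega>) = \<sigma>}
                / measure M {\<omega> \<in> space M. snd (X s \<omega>) = \<sigma>} / t)
      \<longlongrightarrow> (\<Sum>\<eta>1\<in>UNIV. \<Sum>\<eta>2\<in>UNIV. IP E p (\<eta>1, \<sigma>) * Qpow E p 1 (\<eta>1, \<sigma>) (\<eta>2, \<sigma>')) / D) (at_right 0)"
    by (rule tendsto_cong[THEN iffD1, OF ev lim])
  have V: "(\<Sum>\<eta>1\<in>UNIV. \<Sum>\<eta>2\<in>UNIV. IP E p (\<eta>1, \<sigma>) * Qpow E p 1 (\<eta>1, \<sigma>) (\<eta>2, \<sigma>')) / D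
      = 1/4 * real (card (incident E x)) * p * (1 - p) ^ card {e \<in> incident E x. agree \<sigma> e}"
    unfolding \<sigma>'_def D_def by (rule ratio[OF graph p0 p1 spins]) (use Dpos D_def in simp)
  show ?thesis using L unfolding V .
qed

end
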